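(* Let $A$ be a unital C*-algebra, $\mathcal H$ a finitely or countably generated Hilbert $A$-module, and $\{x_j : j\in\mathbb J\}$ a standard frame of $\mathcal H$. Assume that this frame is (standard) normalized tight with respect to two $A$-valued inner products $\langle\cdot,\cdot\rangle_1$ and $\langle\cdot,\cdot\rangle_2$ on $\mathcal H$, each inducing a norm equivalent to the given one. Then $\langle x,y\rangle_1=\langle x,y\rangle_2$ for all $x,y\in\mathcal H$.
   Context: A (left) Hilbert $A$-module is a left $A$-module $\mathcal H$ with an $A$-valued inner product $\langle\cdot,\cdot\rangle$, $A$-linear in the first argument, with $\langle x,y\rangle=\langle y,x\rangle^*$, $\langle x,x\rangle\ge0$ and $=0$ only for $x=0$, complete in $\|x\|=\|\langle x,x\rangle\|^{1/2}$. Finitely generated: every element is an $A$-linear combination of finitely many fixed elements; countably generated: some countable subset has norm-dense $A$-linear span. A sequence $\{x_j:j\in\mathbb J\}$ ($\mathbb J$ finite or countable) is a frame with respect to an inner product $\langle\cdot,\cdot\rangle$ if there are $C,D>0$ with $C\langle x,x\rangle\le\sum_j\langle x,x_j\rangle\langle x_j,x\rangle\le D\langle x,x\rangle$ for all $x$; normalized tight if $\langle x,x\rangle=\sum_j\langle x,x_j\rangle\langle x_j,x\rangle$ for all $x$; standard if this series converges in norm for all $x$. *)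

theory Defs
  imports Complex_Main "HOL-Library.Countable_Set"
begin

text \<open>A unital complex C*-algebra: the carrier type is a real unital Banach algebra,
  equipped with a complex scalar multiplication sc (extending the real one, compatible
  with the norm and the product) and an involution st satisfying the C*-identity.\<close>
definition cstar_alg :: "(complex \<Rightarrow> 'a::{real_normed_algebra_1,banach} \<Rightarrow> 'a) \<Rightarrow> ('a \<Rightarrow> 'a) \<Rightarrow> bool" where
  "cstar_alg sc st \<longleftrightarrow>
     (\<forall>c a b. sc c (a + b) = sc c a + sc c b) \<and>
     (\<forall>c d a. sc (c + d) a = sc c a + sc d a) \<and>
     (\<forall>c d a. sc c (sc d a) = sc (c * d) a) \<and>
     (\<forall>r a. sc (complex_of_real r) a = r *\<^sub>R a) \<and>
     (\<forall>c a. norm (sc c a) = cmod c * norm a) \<and>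
     (\<forall>c a b. sc c (a * b) = sc c a * b \<and> sc c (a * b) = a * sc c b) \<and>
     (\<forall>a b. st (a + b) = st a + st b) \<and>
     (\<forall>c a. st (sc c a) = sc (cnj c) (st a)) \<and>
     (\<forall>a b. st (a * b) = st b * st a) \<and>
     (\<forall>a. st (st a) = a) \<and>
     (\<forall>a. norm (st a * a) = (norm a)\<^sup>2)"

definition cpositive :: "('a::ring \<Rightarrow> 'a) \<Rightarrow> 'a \<Rightarrow> bool" where
  "cpositive st a \<longleftrightarrow> (\<exists>b. a = st b * b)"

definition cle :: "('a::ring \<Rightarrow> 'a) \<Rightarrow> 'a \<Rightarrow> 'a \<Rightarrow> bool" where
  "cle st a b \<longleftrightarrow> cpositive st (b - a)"

definition left_module :: "('a::ring_1 \<Rightarrow> 'm::ab_group_add \<Rightarrow> 'm) \<Rightarrow> bool" where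
  "left_module smult \<longleftrightarrow>
     (\<forall>a x y. smult a (x + y) = smult a x + smult a y) \<and>
     (\<forall>a b x. smult (a + b) x = smult a x + smult b x) \<and>
     (\<forall>a b x. smult (a * b) x = smult a (smult b x)) \<and>
     (\<forall>x. smult 1 x = x)"

definition A_inner_product :: "('a::ring \<Rightarrow> 'a) \<Rightarrow> ('a \<Rightarrow> 'm::ab_group_add \<Rightarrow> 'm) \<Rightarrow> ('m \<Rightarrow> 'm \<Rightarrow> 'a) \<Rightarrow> bool" where
  "A_inner_product st smult ip \<longleftrightarrow>
     (\<forall>a x y z. ip (smult a x + y) z = a * ip x z + ip y z) \<and>
     (\<forall>x y. ip x y = st (ip y x)) \<and>
     (\<forall>x. cpositive st (ip x x)) \<and>
     (\<forall>x. ip x x = 0 \<longrightarrow> x = 0)"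

definition ipnorm :: "('m \<Rightarrow> 'm \<Rightarrow> 'a::real_normed_vector) \<Rightarrow> 'm \<Rightarrow> real" where
  "ipnorm ip x = sqrt (norm (ip x x))"

definition ip_complete :: "('m::ab_group_add \<Rightarrow> 'm \<Rightarrow> 'a::real_normed_vector) \<Rightarrow> bool" where
  "ip_complete ip \<longleftrightarrow>
     (\<forall>f :: nat \<Rightarrow> 'm. (\<forall>e>0. \<exists>N. \<forall>m\<ge>N. \<forall>n\<ge>N. ipnorm ip (f m - f n) < e) \<longrightarrow>
        (\<exists>l. (\<lambda>n. ipnorm ip (f n - l)) \<longlonglongrightarrow> 0))"

definition hilbert_module ::
  "(complex \<Rightarrow> 'a::{real_normed_algebra_1,banach} \<Rightarrow> 'a) \<Rightarrow> ('a \<Rightarrow> 'a) \<Rightarrow> ('a \<Rightarrow> 'm::ab_group_add \<Rightarrow> 'm) \<Rightarrow> ('m \<Rightarrow> 'm \<Rightarrow> 'a) \<Rightarrow> bool" where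
  "hilbert_module sc st smult ip \<longleftrightarrow>
     cstar_alg sc st \<and> left_module smult \<and> A_inner_product st smult ip \<and> ip_complete ip"

definition A_span :: "('a \<Rightarrow> 'm::ab_group_add \<Rightarrow> 'm) \<Rightarrow> 'm set \<Rightarrow> 'm set" where
  "A_span smult G = {x. \<exists>F a. finite F \<and> F \<subseteq> G \<and> x = (\<Sum>g\<in>F. smult (a g) g)}"

definition finitely_generated :: "('a \<Rightarrow> 'm::ab_group_add \<Rightarrow> 'm) \<Rightarrow> bool" where
  "finitely_generated smult \<longleftrightarrow> (\<exists>G. finite G \<and> A_span smult G = UNIV)"

definition countably_generated :: "('a \<Rightarrow> 'm::ab_group_add \<Rightarrow> 'm) \<Rightarrow> ('m \<Rightarrow> 'm \<Rightarrow> 'a::real_normed_vector) \<Rightarrow> bool" where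
  "countably_generated smult ip \<longleftrightarrow>
     (\<exists>G. countable G \<and> (\<forall>x e. e > 0 \<longrightarrow> (\<exists>y\<in>A_span smult G. ipnorm ip (x - y) < e)))"

definition frame_psum :: "('m \<Rightarrow> 'm \<Rightarrow> 'a::ring) \<Rightarrow> nat set \<Rightarrow> (nat \<Rightarrow> 'm) \<Rightarrow> 'm \<Rightarrow> nat \<Rightarrow> 'a" where
  "frame_psum ip J xs x n = (\<Sum>j\<in>J \<inter> {..<n}. ip x (xs j) * ip (xs j) x)"

definition standard_frame :: "('a::{real_normed_algebra_1,banach} \<Rightarrow> 'a) \<Rightarrow> ('m \<Rightarrow> 'm \<Rightarrow> 'a) \<Rightarrow> nat set \<Rightarrow> (nat \<Rightarrow> 'm) \<Rightarrow> bool" where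
  "standard_frame st ip J xs \<longleftrightarrow>
     (\<exists>C D. C > 0 \<and> D > 0 \<and>
        (\<forall>x. \<exists>s. frame_psum ip J xs x \<longlonglongrightarrow> s \<and>
               cle st (C *\<^sub>R ip x x) s \<and> cle st s (D *\<^sub>R ip x x)))"

definition standard_nt_frame :: "('m \<Rightarrow> 'm \<Rightarrow> 'a::{real_normed_algebra_1,banach}) \<Rightarrow> nat set \<Rightarrow> (nat \<Rightarrow> 'm) \<Rightarrow> bool" where
  "standard_nt_frame ip J xs \<longleftrightarrow> (\<forall>x. frame_psum ip J xs x \<longlonglongrightarrow> ip x x)"

definition equiv_norms :: "('m \<Rightarrow> 'm \<Rightarrow> 'a::real_normed_vector) \<Rightarrow> ('m \<Rightarrow> 'm \<Rightarrow> 'a) \<Rightarrow> bool" where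
  "equiv_norms ip ip' \<longleftrightarrow>
     (\<exists>c d. c > 0 \<and> d > 0 \<and> (\<forall>x. c * ipnorm ip x \<le> ipnorm ip' x \<and> ipnorm ip' x \<le> d * ipnorm ip x))"

end

theory Submission
  imports Defs "HOL-Analysis.Analysis" "HOL-Computational_Algebra.Formal_Power_Series"
begin

locale cstar =
  fixes sc :: "complex \<Rightarrow> 'a::{real_normed_algebra_1,banach} \<Rightarrow> 'a"
    and st :: "'a \<Rightarrow> 'a"
  assumes sc_add: "sc c (a + b) = sc c a + sc c b"
    and sc_add_left: "sc (c + d) a = sc c a + sc d a"
    and sc_sc: "sc c (sc d a) = sc (c * d) a"
    and sc_real: "sc (complex_of_real r) a = r *\<^sub>R a"
    and sc_norm: "norm (sc c a) = cmod c * norm a"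
    and sc_mult_l: "sc c (a * b) = sc c a * b"
    and sc_mult_r: "sc c (a * b) = a * sc c b"
    and st_add: "st (a + b) = st a + st b"
    and st_sc: "st (sc c a) = sc (cnj c) (st a)"
    and st_mult: "st (a * b) = st b * st a"
    and st_st[simp]: "st (st a) = a"
    and cstar_id: "norm (st a * a) = (norm a)\<^sup>2"
begin

definition cs :: "complex \<Rightarrow> 'a" where "cs c = sc c 1"

lemma sc_cs: "sc c a = cs c * a"
  by (metis cs_def mult_1 sc_mult_l)
lemma sc_cs': "sc c a = a * cs c"
  by (metis cs_def mult_1_right sc_mult_r)
lemma cs_comm: "cs c * a = a * cs c"
  using sc_cs sc_cs' by metis
lemma cs_add: "cs (c + d) = cs c + cs d" by (simp add: cs_def sc_add_left)
lemma cs_mult: "cs (c * d) = cs c * cs d"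
  by (metis cs_def sc_cs sc_sc)
lemma cs_of_real: "cs (complex_of_real r) = of_real r"
  unfolding cs_def sc_real by (simp add: of_real_def)
lemma cs_1[simp]: "cs 1 = 1" using cs_of_real[of 1] by simp
lemma cs_0[simp]: "cs 0 = 0" using cs_of_real[of 0] by simp
lemma cs_norm[simp]: "norm (cs c) = cmod c" by (simp add: cs_def sc_norm)
lemma cs_minus: "cs (- c) = - cs c"
  by (metis add.right_inverse add_eq_0_iff cs_0 cs_add)
lemma cs_diff: "cs (c - d) = cs c - cs d"
  by (metis cs_add cs_minus diff_conv_add_uminus)
lemma cs_sum: "cs (sum f A) = sum (\<lambda>x. cs (f x)) A"
  by (induction A rule: infinite_finite_induct) (auto simp: cs_add)
lemma cs_power: "cs (c ^ n) = cs c ^ n"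
  by (induction n) (auto simp: cs_mult)
lemma cs_numeral: "cs (numeral n) = numeral n"
  using cs_of_real[of "numeral n"] by simp
lemma cs_of_nat: "cs (of_nat n) = of_nat n"
  using cs_of_real[of "of_nat n"] by simp

lemma st_0[simp]: "st 0 = 0"
  by (metis add_cancel_right_right st_add)
lemma st_minus: "st (- a) = - st a"
  by (metis add.right_inverse add_eq_0_iff st_0 st_add)
lemma st_diff: "st (a - b) = st a - st b"
  by (metis diff_conv_add_uminus st_add st_minus)
lemma st_1[simp]: "st 1 = 1"
proof -
  have "st 1 = st 1 * 1" by simp
  hence "st (st 1) = st 1 * st (st 1)" by (metis st_mult)
  thus ?thesis by simp
qed
lemma st_cs: "st (cs c) = cs (cnj c)"
  by (simp add: cs_def st_sc)
lemma st_scaleR: "st (r *\<^sub>R a) = r *\<^sub>R st a"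
  by (metis complex_cnj_complex_of_real sc_real st_sc)
lemma st_of_real: "st (of_real r) = of_real r"
  by (simp add: of_real_def st_scaleR)
lemma st_sum: "st (sum f A) = sum (\<lambda>x. st (f x)) A"
  by (induction A rule: infinite_finite_induct) (auto simp: st_add)
lemma st_power: "st (a ^ n) = st a ^ n"
  by (induction n) (auto simp: st_mult power_commutes)

lemma norm_st[simp]: "norm (st a) = norm a"
proof -
  have le: "norm x \<le> norm (st x)" for x
  proof -
    have "(norm x)\<^sup>2 \<le> norm (st x) * norm x" using cstar_id[of x] norm_mult_ineq[of "st x" x] by simp
    thus ?thesis
      by (metis mult_le_cancel_right norm_ge_zero power2_eq_square linorder_not_le mult_zero_right
          order_less_le_trans zero_less_norm_iff norm_zero order.refl)
  qed
  show ?thesis using le[of a] le[of "st a"] by simp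
qed

lemma bl_st: "bounded_linear st"
  by (rule bounded_linear_intro[where K=1]) (auto simp: st_add st_scaleR)

lemma cstar_id': "norm (a * st a) = (norm a)\<^sup>2"
  using cstar_id[of "st a"] by simp

definition sa :: "'a \<Rightarrow> bool" where "sa a \<longleftrightarrow> st a = a"

lemma sa_sq_norm: "sa a \<Longrightarrow> norm (a * a) = (norm a)\<^sup>2"
  using cstar_id[of a] by (simp add: sa_def)

end

lemma cstar_alg_imp: "cstar_alg sc st \<Longrightarrow> cstar sc st"
  unfolding cstar_alg_def by unfold_locales metis+

definition inv_el :: "'a::ring_1 \<Rightarrow> bool" where
  "inv_el a \<longleftrightarrow> (\<exists>b. a * b = 1 \<and> b * a = 1)"
definition inv_of :: "'a::ring_1 \<Rightarrow> 'a" where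
  "inv_of a = (SOME b. a * b = 1 \<and> b * a = 1)"

lemma inv_of_prop: "inv_el a \<Longrightarrow> a * inv_of a = 1 \<and> inv_of a * a = 1"
  unfolding inv_el_def inv_of_def by (rule someI_ex)
lemma inv_of_r[simp]: "inv_el a \<Longrightarrow> a * inv_of a = 1" using inv_of_prop by blast
lemma inv_of_l[simp]: "inv_el a \<Longrightarrow> inv_of a * a = 1" using inv_of_prop by blast

lemma inv_unique:
  assumes "a * b = 1" "b * a = 1" shows "inv_el a" "inv_of a = b"
proof -
  show i: "inv_el a" using assms unfolding inv_el_def by blast
  have "inv_of a = inv_of a * (a * b)" using assms by simp
  also have "\<dots> = b" using i by (simp flip: mult.assoc)
  finally show "inv_of a = b" .
qed

lemma inv_el_mult: "inv_el a \<Longrightarrow> inv_el b \<Longrightarrow> inv_el (a * b)"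
proof -
  assume a: "inv_el a" and b: "inv_el b"
  have "(a * b) * (inv_of b * inv_of a) = 1"
    by (metis a b inv_of_r mult.assoc mult_1_left)
  moreover have "(inv_of b * inv_of a) * (a * b) = 1"
    by (metis a b inv_of_l mult.assoc mult_1_left)
  ultimately show ?thesis unfolding inv_el_def by blast
qed

lemma inv_el_minus: "inv_el a \<Longrightarrow> inv_el (- a)"
  unfolding inv_el_def by (metis minus_mult_minus)
lemma inv_el_minus_iff: "inv_el (- a) = inv_el a"
  using inv_el_minus[of a] inv_el_minus[of "-a"] by auto
lemma inv_el_1[simp]: "inv_el 1" unfolding inv_el_def by auto

lemma inv_el_of_inv: "inv_el a \<Longrightarrow> inv_el (inv_of a)"
proof -
  assume "inv_el a"
  hence "inv_of a * a = 1 \<and> a * inv_of a = 1" by simp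
  thus ?thesis unfolding inv_el_def[of "inv_of a"] by blast
qed

lemma inv_el_mult_comm:
  assumes "a * b = b * a" "inv_el (a * b)" shows "inv_el a"
proof -
  let ?c = "inv_of (a * b)"
  have 1: "a * (b * ?c) = 1" using assms by (simp add: mult.assoc[symmetric])
  have "?c * (a * b) = 1" using assms by simp
  hence "?c * (b * a) = 1" using assms by simp
  hence 2: "(?c * b) * a = 1" by (simp add: mult.assoc)
  have "b * ?c = ?c * b"
  proof -
    have "(a*b) * ?c = ?c * (a * b)" using assms by simp
    have "b * ?c = ?c * (a*b) * b * ?c" using 2
      by (metis assms(1) assms(2) inv_of_l mult.assoc mult_1_left)
    also have "\<dots> = ?c * b * ((a * b) * ?c)" by (simp add: assms(1) mult.assoc)
    also have "\<dots> = ?c * b" using assms by simp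
    finally show ?thesis .
  qed
  thus ?thesis using 1 2 unfolding inv_el_def by metis
qed

lemma inv_commute:
  assumes "inv_el a" "x * a = a * x" shows "x * inv_of a = inv_of a * x"
proof -
  have "x * inv_of a = inv_of a * a * x * inv_of a" using assms by simp
  also have "\<dots> = inv_of a * x * (a * inv_of a)" using assms(2) by (metis mult.assoc)
  also have "\<dots> = inv_of a * x" using assms by simp
  finally show ?thesis .
qed

lemma neumann:
  fixes y :: "'a::{real_normed_algebra_1,banach}"
  assumes "norm y < 1"
  shows "inv_el (1 - y)" "norm (inv_of (1 - y)) \<le> 1 / (1 - norm y)"
    "norm (inv_of (1 - y) - 1) \<le> norm y / (1 - norm y)"
proof -
  have ny: "norm (y ^ n) \<le> norm y ^ n" for n by (rule norm_power_ineq)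
  have sg: "summable (\<lambda>n. norm y ^ n)" using assms by (simp add: summable_geometric)
  have sn: "summable (\<lambda>n. norm (y ^ n))"
    by (rule summable_comparison_test[OF _ sg]) (auto simp: ny)
  hence s: "summable (\<lambda>n. y ^ n)" by (rule summable_norm_cancel)
  define S where "S = (\<Sum>n. y ^ n)"
  have yn: "(\<lambda>n. y ^ n) \<longlonglongrightarrow> 0"
    using summable_LIMSEQ_zero[OF s] .
  have t: "(\<lambda>n. y ^ n - y ^ Suc n) sums (1 - 0)"
  proof -
    have "(\<lambda>n. y ^ n - y ^ Suc n) sums (y ^ 0 - 0)"
      by (rule telescope_sums'[OF yn])
    thus ?thesis by simp
  qed
  have "(\<lambda>n. (1 - y) * y ^ n) sums ((1 - y) * S)"
    unfolding S_def by (rule summable_sums[THEN sums_mult, OF s])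
  moreover have "(\<lambda>n. (1 - y) * y ^ n) = (\<lambda>n. y ^ n - y ^ Suc n)"
    by (simp add: algebra_simps)
  ultimately have 1: "(1 - y) * S = 1" using t sums_unique2 by fastforce
  have "(\<lambda>n. y ^ n * (1 - y)) sums (S * (1 - y))"
    unfolding S_def by (rule summable_sums[THEN sums_mult2, OF s])
  moreover have "(\<lambda>n. y ^ n * (1 - y)) = (\<lambda>n. y ^ n - y ^ Suc n)"
    by (simp add: algebra_simps power_commutes)
  ultimately have 2: "S * (1 - y) = 1" using t sums_unique2 by fastforce
  show i: "inv_el (1 - y)" using 1 2 unfolding inv_el_def by blast
  have io: "inv_of (1 - y) = S" using inv_unique[OF 1 2] by simp
  have "norm S \<le> (\<Sum>n. norm (y ^ n))" unfolding S_def by (rule summable_norm[OF sn])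
  also have "\<dots> \<le> (\<Sum>n. norm y ^ n)" by (rule suminf_le[OF ny sn sg])
  also have "\<dots> = 1 / (1 - norm y)" using assms by (simp add: suminf_geometric)
  finally show nS: "norm (inv_of (1 - y)) \<le> 1 / (1 - norm y)" using io by simp
  have "S - 1 = y * S" using 1 by (simp add: algebra_simps)
  hence "norm (S - 1) \<le> norm y * norm S" by (simp add: norm_mult_ineq)
  also have "\<dots> \<le> norm y * (1 / (1 - norm y))"
    using nS io by (intro mult_left_mono) auto
  finally show "norm (inv_of (1 - y) - 1) \<le> norm y / (1 - norm y)" using io by simp
qed

lemma inv_perturb:
  fixes a e :: "'a::{real_normed_algebra_1,banach}"
  assumes a: "inv_el a" and small: "norm (inv_of a) * norm e < 1"
  shows "inv_el (a + e)"
    "norm (inv_of (a + e) - inv_of a) \<le> (norm (inv_of a))\<^sup>2 * norm e / (1 - norm (inv_of a) * norm e)"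
proof -
  let ?b = "inv_of a"
  have nbe: "norm (?b * e) \<le> norm ?b * norm e" by (rule norm_mult_ineq)
  hence lt: "norm (- (?b * e)) < 1" using small by simp
  note N = neumann[OF lt]
  let ?N = "inv_of (1 - - (?b * e))"
  have eq1: "1 - - (?b * e) = 1 + ?b * e" by simp
  have r: "(a + e) * (?N * ?b) = 1"
  proof -
    have "a + e = a * (1 + ?b * e)" using a by (simp add: algebra_simps mult.assoc[symmetric])
    hence "(a + e) * (?N * ?b) = a * ((1 - - (?b * e)) * ?N) * ?b" by (simp add: mult.assoc)
    also have "\<dots> = 1" using N(1) a by simp
    finally show ?thesis .
  qed
  have l: "(?N * ?b) * (a + e) = 1"
  proof -
    have "?b * (a + e) = 1 - - (?b * e)" using a by (simp add: algebra_simps)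
    hence "(?N * ?b) * (a + e) = ?N * (1 - - (?b * e))" by (simp add: mult.assoc)
    also have "\<dots> = 1" using N(1) by simp
    finally show ?thesis .
  qed
  show "inv_el (a + e)" using inv_unique[OF r l] by simp
  have io: "inv_of (a + e) = ?N * ?b" using inv_unique[OF r l] by simp
  have "inv_of (a + e) - ?b = (?N - 1) * ?b" using io by (simp add: algebra_simps)
  hence "norm (inv_of (a + e) - ?b) \<le> norm (?N - 1) * norm ?b" by (simp add: norm_mult_ineq)
  also have "\<dots> \<le> (norm (?b * e) / (1 - norm (?b * e))) * norm ?b"
    using N(3) by (intro mult_right_mono) auto
  also have "\<dots> \<le> (norm ?b * norm e / (1 - norm ?b * norm e)) * norm ?b"
  proof (rule mult_right_mono)
    show "norm (?b * e) / (1 - norm (?b * e)) \<le> norm ?b * norm e / (1 - norm ?b * norm e)"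
      using nbe small by (intro frac_le) auto
  qed simp
  also have "\<dots> = (norm ?b)\<^sup>2 * norm e / (1 - norm ?b * norm e)" by (simp add: power2_eq_square)
  finally show "norm (inv_of (a + e) - inv_of a) \<le> (norm (inv_of a))\<^sup>2 * norm e / (1 - norm (inv_of a) * norm e)" .
qed

lemma tendsto_inv_of:
  fixes f :: "'b \<Rightarrow> 'a::{real_normed_algebra_1,banach}"
  assumes f: "(f \<longlongrightarrow> a) F" and a: "inv_el a"
  shows "((\<lambda>x. inv_of (f x)) \<longlongrightarrow> inv_of a) F"
proof -
  let ?b = "inv_of a"
  define B where "B = norm ?b + 1"
  have B: "B > 0" "norm ?b \<le> B" unfolding B_def using norm_ge_zero[of ?b] by linarith+
  have e0: "((\<lambda>x. f x - a) \<longlongrightarrow> 0) F" using f by (simp add: LIM_zero)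
  hence "eventually (\<lambda>x. norm (f x - a) < 1 / (2 * B)) F"
    using B by (auto simp: tendsto_iff dist_norm)
  hence ev: "eventually (\<lambda>x. norm (inv_of (f x) - ?b) \<le> 2 * B\<^sup>2 * norm (f x - a)) F"
  proof (rule eventually_mono)
    fix x assume x: "norm (f x - a) < 1 / (2 * B)"
    let ?e = "f x - a"
    have "norm ?b * norm ?e \<le> B * norm ?e" using B by (simp add: mult_right_mono)
    also have "\<dots> \<le> B * (1 / (2 * B))" using x B by (intro mult_left_mono) auto
    also have "\<dots> = 1/2" using B by simp
    finally have sm: "norm ?b * norm ?e \<le> 1/2" .
    have P: "norm (inv_of (a + ?e) - ?b) \<le> (norm ?b)\<^sup>2 * norm ?e / (1 - norm ?b * norm ?e)"
      using inv_perturb(2)[OF a, of ?e] sm by linarith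
    also have "\<dots> \<le> (norm ?b)\<^sup>2 * norm ?e / (1/2)"
      using sm by (intro divide_left_mono) auto
    also have "\<dots> \<le> 2 * B\<^sup>2 * norm ?e"
    proof -
      have "(norm ?b)\<^sup>2 \<le> B\<^sup>2" using B by (intro power_mono) auto
      hence "(norm ?b)\<^sup>2 * norm ?e \<le> B\<^sup>2 * norm ?e" by (intro mult_right_mono) auto
      thus ?thesis by (simp add: mult.commute)
    qed
    finally show "norm (inv_of (f x) - ?b) \<le> 2 * B\<^sup>2 * norm (f x - a)" by (simp add: algebra_simps)
  qed
  have "((\<lambda>x. 2 * B\<^sup>2 * norm (f x - a)) \<longlongrightarrow> 0) F"
    using tendsto_mult_right_zero[OF tendsto_norm_zero[OF e0]] by simp
  hence "((\<lambda>x. inv_of (f x) - ?b) \<longlongrightarrow> 0) F"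
    by (rule Lim_null_comparison[OF ev])
  thus ?thesis by (simp add: LIM_zero_iff)
qed

lemma geom_alg:
  fixes z :: "'a::ring_1"
  shows "(1 - z) * (\<Sum>m<n. z ^ m) = 1 - z ^ n" "(\<Sum>m<n. z ^ m) * (1 - z) = 1 - z ^ n"
proof -
  show "(1 - z) * (\<Sum>m<n. z ^ m) = 1 - z ^ n"
  proof (induction n)
    case (Suc n)
    have "(1 - z) * (\<Sum>m<Suc n. z ^ m) = (1 - z) * (\<Sum>m<n. z ^ m) + (1 - z) * z ^ n"
      by (simp add: distrib_left)
    also have "\<dots> = 1 - z ^ Suc n" using Suc by (simp add: algebra_simps)
    finally show ?case .
  qed simp
  show "(\<Sum>m<n. z ^ m) * (1 - z) = 1 - z ^ n"
  proof (induction n)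
    case (Suc n)
    have "(\<Sum>m<Suc n. z ^ m) * (1 - z) = (\<Sum>m<n. z ^ m) * (1 - z) + z ^ n * (1 - z)"
      by (simp add: distrib_right)
    also have "\<dots> = 1 - z ^ Suc n" using Suc by (simp add: algebra_simps power_commutes)
    finally show ?case .
  qed simp
qed

lemma root_unity_sum:
  assumes n: "n > 0" and m: "0 < m" "m < n"
  shows "(\<Sum>k<n. (exp (2 * pi * \<i> / of_nat n) ^ m) ^ k) = 0"
proof -
  let ?w = "exp (2 * pi * \<i> / of_nat n) ^ m"
  have w0: "?w = exp (of_nat m * (2 * pi * \<i> / of_nat n))"
    by (simp only: exp_of_nat_mult)
  have w: "?w = exp (2 * pi * \<i> * of_nat m / of_nat n)"
    unfolding w0 by (simp add: field_simps)
  have wn: "?w ^ n = 1"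
  proof -
    have "?w ^ n = exp (of_nat n * (2 * pi * \<i> * of_nat m / of_nat n))"
      unfolding w by (simp only: exp_of_nat_mult)
    also have "\<dots> = exp (of_int (2 * int m) * pi * \<i>)" using n by (simp add: field_simps)
    also have "\<dots> = 1" unfolding exp_eq_1 by (auto intro!: exI[of _ "int m"])
    finally show ?thesis .
  qed
  have w1: "?w \<noteq> 1"
  proof
    assume "?w = 1"
    hence "exp (2 * pi * \<i> * of_nat m / of_nat n) = 1" using w by simp
    then obtain k :: int where k: "2 * pi * real m / real n = of_int (2 * k) * pi"
      unfolding exp_eq_1 by auto
    have "real m / real n = (2 * pi * real m / real n) / (2 * pi)" by simp
    also have "\<dots> = of_int k" unfolding k by simp
    finally have e: "real m / real n = of_int k" .
    have "0 < real m / real n" "real m / real n < 1" using m n by auto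
    hence "(0::real) < of_int k" "(of_int k :: real) < 1" using e by auto
    hence "0 < k" "k < 1" by simp_all
    thus False by linarith
  qed
  show ?thesis using geometric_sum[OF w1, of n] wn by simp
qed

context cstar
begin

lemma bl_cs: "bounded_linear cs"
proof (rule bounded_linear_intro[where K=1])
  show "cs (x + y) = cs x + cs y" for x y by (rule cs_add)
  show "cs (r *\<^sub>R x) = r *\<^sub>R cs x" for r x
    by (simp add: scaleR_conv_of_real cs_mult cs_of_real)
  show "norm (cs x) \<le> norm x * 1" for x by simp
qed

lemma tendsto_cs: "(f \<longlongrightarrow> c) F \<Longrightarrow> ((\<lambda>x. cs (f x)) \<longlongrightarrow> cs c) F"
  by (rule bounded_linear.tendsto[OF bl_cs])

lemma cs_power_mult: "(cs c * y) ^ n = cs (c ^ n) * y ^ n"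
proof (induction n)
  case (Suc n)
  have "(cs c * y) ^ Suc n = cs c * y * (cs (c ^ n) * y ^ n)" using Suc by simp
  also have "\<dots> = cs c * cs (c ^ n) * (y * y ^ n)"
    by (metis cs_comm mult.assoc)
  also have "\<dots> = cs (c ^ Suc n) * y ^ Suc n" by (simp add: cs_mult)
  finally show ?case .
qed simp

lemma cs_inv_el: "c \<noteq> 0 \<Longrightarrow> inv_el (cs c)"
  unfolding inv_el_def by (rule exI[of _ "cs (inverse c)"]) (simp flip: cs_mult)

lemma inv_cs_sub:
  assumes "norm a < cmod c" shows "inv_el (cs c - a)"
proof -
  have c: "c \<noteq> 0" using assms by auto
  have "norm (cs (inverse c) * a) \<le> cmod (inverse c) * norm a"
    using norm_mult_ineq[of "cs (inverse c)" a] by simp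
  also have "\<dots> < 1"
  proof -
    have "cmod (inverse c) * norm a = norm a / cmod c" by (simp add: norm_inverse divide_inverse)
    also have "\<dots> < 1" using assms c by (simp add: divide_less_eq)
    finally show ?thesis .
  qed
  finally have "inv_el (1 - cs (inverse c) * a)" by (rule neumann(1))
  moreover have "cs c - a = cs c * (1 - cs (inverse c) * a)"
    using c by (simp add: algebra_simps mult.assoc[symmetric] flip: cs_mult)
  ultimately show ?thesis using cs_inv_el[OF c] inv_el_mult by metis
qed

lemma inv_real_sub:
  fixes a :: 'a
  assumes "norm a < \<bar>r\<bar>" shows "inv_el (of_real r - a)"
  using inv_cs_sub[of a "complex_of_real r"] assms by (simp add: cs_of_real)

lemma nonreal_inv:
  assumes h: "sa h" and im: "Im l \<noteq> 0" shows "inv_el (cs l - h)"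
proof (rule ccontr)
  assume ni: "\<not> inv_el (cs l - h)"
  define t where "t = ((norm h)\<^sup>2 + 1) / (2 * Im l)"
  define c where "c = cs (\<i> * complex_of_real t)"
  define a where "a = h + c"
  have "cs (l + \<i> * complex_of_real t) - a = cs l - h" unfolding a_def c_def by (simp add: cs_add)
  hence "\<not> norm a < cmod (l + \<i> * complex_of_real t)" using inv_cs_sub ni by metis
  hence le: "cmod (l + \<i> * complex_of_real t) \<le> norm a" by simp
  have sta: "st a = h - c" unfolding a_def c_def using h by (simp add: st_add st_cs sa_def cs_minus)
  have cc: "c * c = - of_real (t\<^sup>2)"
  proof -
    have "c * c = cs ((\<i> * complex_of_real t) * (\<i> * complex_of_real t))" unfolding c_def by (rule cs_mult[symmetric])
    also have "(\<i> * complex_of_real t) * (\<i> * complex_of_real t) = - complex_of_real (t\<^sup>2)"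
      by (simp add: power2_eq_square algebra_simps)
    finally show ?thesis by (simp only: cs_minus cs_of_real cs_power of_real_power)
  qed
  have chc: "c * h = h * c" unfolding c_def by (rule cs_comm)
  have "st a * a = (h - c) * (h + c)" using sta by (simp add: a_def)
  also have "\<dots> = h * h - c * c" by (simp add: algebra_simps chc)
  finally have "st a * a = h * h - c * c" .
  hence "st a * a = h * h + of_real (t\<^sup>2)" using cc by simp
  hence "(norm a)\<^sup>2 = norm (h * h + of_real (t\<^sup>2))" using cstar_id[of a] by simp
  also have "\<dots> \<le> norm (h * h) + t\<^sup>2" using norm_triangle_ineq[of "h*h" "of_real (t\<^sup>2)"] by (simp only: norm_of_real abs_power2)
  also have "\<dots> = (norm h)\<^sup>2 + t\<^sup>2" using sa_sq_norm[OF h] by simp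
  finally have na: "(norm a)\<^sup>2 \<le> (norm h)\<^sup>2 + t\<^sup>2" .
  have "(cmod (l + \<i> * complex_of_real t))\<^sup>2 \<le> (norm a)\<^sup>2" using le by (intro power_mono) auto
  moreover have "(cmod (l + \<i> * complex_of_real t))\<^sup>2 = (Re l)\<^sup>2 + (Im l + t)\<^sup>2"
    by (simp add: cmod_power2)
  ultimately have "(Re l)\<^sup>2 + (Im l + t)\<^sup>2 \<le> (norm h)\<^sup>2 + t\<^sup>2" using na by linarith
  hence "(Re l)\<^sup>2 + (Im l)\<^sup>2 + 2 * Im l * t \<le> (norm h)\<^sup>2" by (simp add: power2_eq_square algebra_simps)
  moreover have "2 * Im l * t = (norm h)\<^sup>2 + 1" unfolding t_def using im by simp
  ultimately show False using zero_le_power2[of "Re l"] zero_le_power2[of "Im l"] by linarith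
qed

end

context cstar
begin

lemma avg_roots:
  assumes n: "n > 0"
    and inv: "\<And>k. k < n \<Longrightarrow> inv_el (1 - cs (exp (2 * pi * \<i> / of_nat n) ^ k) * y)"
  shows "inv_el (1 - y ^ n)"
    "inv_of (1 - y ^ n) = (1 / real n) *\<^sub>R (\<Sum>k<n. inv_of (1 - cs (exp (2 * pi * \<i> / of_nat n) ^ k) * y))"
proof -
  define w where "w = exp (2 * pi * \<i> / of_nat n)"
  define z where "z k = cs (w ^ k) * y" for k
  define P where "P k = (\<Sum>m<n. z k ^ m)" for k
  have wn: "w ^ n = 1"
  proof -
    have "w ^ n = exp (of_nat n * (2 * pi * \<i> / of_nat n))" unfolding w_def by (simp only: exp_of_nat_mult)
    also have "\<dots> = exp (of_int (2 * 1) * pi * \<i>)" using n by (simp add: field_simps)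
    also have "\<dots> = 1" unfolding exp_eq_1 by (auto intro!: exI[of _ 1])
    finally show ?thesis .
  qed
  have zn: "z k ^ n = y ^ n" for k
  proof -
    have "(w ^ k) ^ n = 1" by (metis power_mult mult.commute power_one wn)
    thus ?thesis unfolding z_def cs_power_mult by simp
  qed
  have L: "inv_of (1 - z k) * (1 - y ^ n) = P k" if k: "k < n" for k
  proof -
    have i: "inv_el (1 - z k)" using inv[OF k] unfolding z_def w_def .
    have "inv_of (1 - z k) * (1 - y ^ n) = inv_of (1 - z k) * ((1 - z k) * P k)"
      unfolding P_def geom_alg(1) zn ..
    also have "\<dots> = P k" using i by (simp flip: mult.assoc)
    finally show ?thesis .
  qed
  have R: "(1 - y ^ n) * inv_of (1 - z k) = P k" if k: "k < n" for k
  proof -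
    have i: "inv_el (1 - z k)" using inv[OF k] unfolding z_def w_def .
    have "(1 - y ^ n) * inv_of (1 - z k) = (P k * (1 - z k)) * inv_of (1 - z k)"
      unfolding P_def geom_alg(2) zn ..
    also have "\<dots> = P k" using i by (simp add: mult.assoc)
    finally show ?thesis .
  qed
  have SP: "(\<Sum>k<n. P k) = of_nat n"
  proof -
    have "(\<Sum>k<n. P k) = (\<Sum>k<n. \<Sum>m<n. cs ((w ^ m) ^ k) * y ^ m)"
      unfolding P_def z_def cs_power_mult
      by (intro sum.cong refl) (simp add: power_mult[symmetric] mult.commute)
    also have "\<dots> = (\<Sum>m<n. \<Sum>k<n. cs ((w ^ m) ^ k) * y ^ m)" by (rule sum.swap)
    also have "\<dots> = (\<Sum>m<n. cs (\<Sum>k<n. (w ^ m) ^ k) * y ^ m)"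
      by (simp add: sum_distrib_right cs_sum)
    also have "\<dots> = (\<Sum>m<n. if m = 0 then of_nat n else 0)"
    proof (intro sum.cong refl)
      fix m assume m: "m \<in> {..<n}"
      show "cs (\<Sum>k<n. (w ^ m) ^ k) * y ^ m = (if m = 0 then of_nat n else 0)"
      proof (cases "m = 0")
        case True thus ?thesis by (simp add: cs_of_nat)
      next
        case False
        hence "(\<Sum>k<n. (w ^ m) ^ k) = 0" using root_unity_sum[OF n, of m] m unfolding w_def by auto
        thus ?thesis using False by simp
      qed
    qed
    also have "\<dots> = of_nat n" using n by simp
    finally show ?thesis .
  qed
  have nn: "(1 / real n) *\<^sub>R (of_nat n :: 'a) = 1"
  proof -
    have "(of_nat n :: 'a) = real n *\<^sub>R 1" by (metis of_real_def of_real_of_nat_eq)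
    thus ?thesis using n by simp
  qed
  define A where "A = (1 / real n) *\<^sub>R (\<Sum>k<n. inv_of (1 - z k))"
  have 1: "A * (1 - y ^ n) = 1"
  proof -
    have "A * (1 - y ^ n) = (1 / real n) *\<^sub>R (\<Sum>k<n. inv_of (1 - z k) * (1 - y ^ n))"
      unfolding A_def by (simp add: sum_distrib_right)
    also have "\<dots> = (1 / real n) *\<^sub>R (\<Sum>k<n. P k)" using L by simp
    also have "\<dots> = 1" using nn by (simp add: SP)
    finally show ?thesis .
  qed
  have 2: "(1 - y ^ n) * A = 1"
  proof -
    have "(1 - y ^ n) * A = (1 / real n) *\<^sub>R (\<Sum>k<n. (1 - y ^ n) * inv_of (1 - z k))"
      unfolding A_def by (simp add: sum_distrib_left)
    also have "\<dots> = (1 / real n) *\<^sub>R (\<Sum>k<n. P k)" using R by simp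
    also have "\<dots> = 1" using nn by (simp add: SP)
    finally show ?thesis .
  qed
  show "inv_el (1 - y ^ n)" using inv_unique[OF 2 1] by simp
  show "inv_of (1 - y ^ n) = (1 / real n) *\<^sub>R (\<Sum>k<n. inv_of (1 - cs (exp (2 * pi * \<i> / of_nat n) ^ k) * y))"
    using inv_unique[OF 2 1] unfolding A_def z_def w_def by simp
qed

end

context cstar
begin

lemma sa_mult_self: "sa h \<Longrightarrow> sa (h * h)" by (simp add: sa_def st_mult)
lemma sa_power: "sa h \<Longrightarrow> sa (h ^ n)" by (simp add: sa_def st_power)

lemma sa_power_norm:
  assumes q: "sa q" and nq: "norm q = 1" shows "norm (q ^ n) = 1"
proof -
  have p2: "norm (q ^ (2 ^ m)) = 1" for m
  proof (induction m)
    case (Suc m)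
    have "q ^ (2 ^ Suc m) = q ^ (2 ^ m + 2 ^ m)" by (simp add: mult_2)
    hence "q ^ (2 ^ Suc m) = q ^ (2 ^ m) * q ^ (2 ^ m)" by (simp add: power_add)
    hence "norm (q ^ (2 ^ Suc m)) = (norm (q ^ (2 ^ m)))\<^sup>2" using sa_sq_norm[OF sa_power[OF q]] by simp
    thus ?case using Suc by simp
  qed (simp add: nq)
  have le: "norm (q ^ k) \<le> 1" for k using norm_power_ineq[of q k] nq by simp
  have "n < 2 ^ n" by (rule less_exp)
  hence "q ^ (2 ^ n) = q ^ n * q ^ (2 ^ n - n)" by (simp add: power_add[symmetric])
  hence "1 = norm (q ^ n * q ^ (2 ^ n - n))" using p2[of n] by simp
  also have "\<dots> \<le> norm (q ^ n) * norm (q ^ (2 ^ n - n))" by (rule norm_mult_ineq)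
  also have "\<dots> \<le> norm (q ^ n)" using le[of "2 ^ n - n"] by (simp add: mult_left_le)
  finally show ?thesis using le[of n] by simp
qed

lemma cmod_exp_root: "cmod (exp (2 * pi * \<i> / of_nat n) ^ k) = 1"
  by (simp add: norm_power norm_exp_eq_Re)

theorem SR_sa:
  assumes h: "sa h" and nh: "norm h = 1" shows "\<not> inv_el (1 - h * h)"
proof
  assume inv1: "inv_el (1 - h * h)"
  define q where "q = h * h"
  have q: "sa q" unfolding q_def using sa_mult_self[OF h] .
  have nq: "norm q = 1" unfolding q_def using sa_sq_norm[OF h] nh by simp
  have qn: "norm (q ^ n) = 1" for n using sa_power_norm[OF q nq] .
  have invD: "inv_el (1 - cs \<mu> * q)" if mu: "\<mu> \<in> cball 0 1" for \<mu>
  proof -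
    have m1: "cmod \<mu> \<le> 1" using mu by simp
    show ?thesis
    proof (cases "cmod \<mu> < 1")
      case True
      have "norm (cs \<mu> * q) \<le> cmod \<mu>" using norm_mult_ineq[of "cs \<mu>" q] nq by simp
      hence "norm (cs \<mu> * q) < 1" using True by linarith
      thus ?thesis by (rule neumann(1))
    next
      case False
      hence m1: "cmod \<mu> = 1" using m1 by simp
      show ?thesis
      proof (cases "Im \<mu> = 0")
        case False
        have mu0: "\<mu> \<noteq> 0" using m1 by auto
        have "\<mu> * cnj \<mu> = complex_of_real ((cmod \<mu>)\<^sup>2)" by (rule complex_norm_square[symmetric])
        hence mc: "cs \<mu> * cs (cnj \<mu>) = 1" using m1 by (simp flip: cs_mult)
        have "1 - cs \<mu> * q = cs \<mu> * (cs (cnj \<mu>) - q)" using mc by (simp add: algebra_simps)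
        moreover have "inv_el (cs (cnj \<mu>) - q)" using nonreal_inv[OF q] False by simp
        ultimately show ?thesis using cs_inv_el[OF mu0] inv_el_mult by metis
      next
        case True
        hence "\<mu> = complex_of_real (Re \<mu>)" by (simp add: complex_eq_iff)
        moreover have "\<bar>Re \<mu>\<bar> = 1" using m1 True by (simp add: cmod_def)
        moreover have "Re \<mu> = 1 \<or> Re \<mu> = -1" using \<open>\<bar>Re \<mu>\<bar> = 1\<close> by (simp add: abs_if split: if_splits)
        ultimately have "\<mu> = 1 \<or> \<mu> = -1" by (metis of_real_1 of_real_minus)
        thus ?thesis
        proof
          assume "\<mu> = 1" thus ?thesis using inv1 by (simp add: q_def)
        next
          assume m: "\<mu> = -1"
          define c where "c = cs \<i>"
          have cc: "c * c = -1" unfolding c_def by (simp flip: cs_mult add: cs_minus)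
          have ch: "c * h = h * c" unfolding c_def by (rule cs_comm)
          have "(h + c) * (h - c) = h * h - c * c" by (simp add: algebra_simps ch)
          hence e: "1 - cs \<mu> * q = (h + c) * (h - c)" using cc m by (simp add: q_def cs_minus)
          have "inv_el (cs (- \<i>) - h)" by (rule nonreal_inv[OF h]) simp
          hence i1: "inv_el (h + c)" using inv_el_minus[of "cs (- \<i>) - h"] by (simp add: c_def cs_minus)
          have "inv_el (cs \<i> - h)" by (rule nonreal_inv[OF h]) simp
          hence i2: "inv_el (h - c)" using inv_el_minus[of "cs \<i> - h"] by (simp add: c_def)
          show ?thesis using e i1 i2 inv_el_mult by metis
        qed
      qed
    qed
  qed
  define G where "G \<mu> = inv_of (1 - cs \<mu> * q)" for \<mu>
  have cont: "continuous_on (cball 0 1) G"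
    unfolding continuous_on_def
  proof
    fix x assume x: "x \<in> cball (0::complex) 1"
    have "((\<lambda>\<mu>. 1 - cs \<mu> * q) \<longlongrightarrow> 1 - cs x * q) (at x within cball 0 1)"
      by (intro tendsto_intros tendsto_cs)
    thus "(G \<longlongrightarrow> G x) (at x within cball 0 1)"
      unfolding G_def by (rule tendsto_inv_of[OF _ invD[OF x]])
  qed
  have uc: "uniformly_continuous_on (cball 0 1) G"
    by (rule compact_uniformly_continuous[OF cont compact_cball])
  then obtain \<delta> where d: "\<delta> > 0"
    and dd: "\<And>x x'. x \<in> cball 0 1 \<Longrightarrow> x' \<in> cball 0 1 \<Longrightarrow> dist x' x < \<delta> \<Longrightarrow> dist (G x') (G x) < 1/4"
    unfolding uniformly_continuous_on_def by (metis zero_less_divide_1_iff zero_less_numeral)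
  define t where "t = max (1/2) (1 - \<delta>/2)"
  have t: "0 < t" "t < 1" "1 - t < \<delta>" unfolding t_def using d by auto
  have "(\<lambda>n. t ^ n) \<longlonglongrightarrow> 0" using t by (intro LIMSEQ_power_zero) auto
  hence "eventually (\<lambda>n. t ^ n < 1/10) sequentially" by (rule order_tendstoD) simp
  then obtain N where N: "\<And>n. n \<ge> N \<Longrightarrow> t ^ n < 1/10" unfolding eventually_sequentially by auto
  define n where "n = Suc N"
  have n: "n > 0" "t ^ n < 1/10" using N[of n] unfolding n_def by auto
  define w where "w = exp (2 * pi * \<i> / of_nat n)"
  have wk: "cmod (w ^ k) = 1" for k unfolding w_def by (rule cmod_exp_root)
  have eqt: "cs (w ^ k) * (cs (complex_of_real t) * q) = cs (w ^ k * complex_of_real t) * q" for k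
    by (simp add: cs_mult mult.assoc)
  have i1: "inv_el (1 - cs (w ^ k) * (cs (complex_of_real t) * q))" for k
    unfolding eqt using t by (intro invD) (simp add: norm_mult wk)
  have i2: "inv_el (1 - cs (w ^ k) * q)" for k by (intro invD) (simp add: wk)
  note A1 = avg_roots[OF n(1) i1[unfolded w_def]]
  note A2 = avg_roots[OF n(1) i2[unfolded w_def]]
  have y1n: "(cs (complex_of_real t) * q) ^ n = of_real (t ^ n) * q ^ n"
    unfolding cs_power_mult by (simp add: cs_of_real flip: of_real_power)
  let ?A1 = "inv_of (1 - (cs (complex_of_real t) * q) ^ n)"
  let ?A2 = "inv_of (1 - q ^ n)"
  have d12: "norm (?A1 - ?A2) \<le> 1/4"
  proof -
    have "?A1 - ?A2 = (1 / real n) *\<^sub>R (\<Sum>k<n. G (w ^ k * complex_of_real t) - G (w ^ k))"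
      unfolding A1(2) A2(2) G_def w_def[symmetric] eqt by (simp add: sum_subtractf scaleR_diff_right)
    hence "norm (?A1 - ?A2) \<le> (1 / real n) * (\<Sum>k<n. norm (G (w ^ k * complex_of_real t) - G (w ^ k)))"
      using norm_sum[of "\<lambda>k. G (w ^ k * complex_of_real t) - G (w ^ k)" "{..<n}"] by (simp add: divide_right_mono)
    also have "\<dots> \<le> (1 / real n) * (\<Sum>k<n. 1/4)"
    proof (intro mult_left_mono sum_mono)
      fix k assume "k \<in> {..<n}"
      have "dist (w ^ k * complex_of_real t) (w ^ k) = cmod (w ^ k) * cmod (complex_of_real t - 1)"
        by (simp add: dist_norm norm_mult[symmetric] algebra_simps)
      also have "\<dots> < \<delta>"
      proof -
        have "cmod (complex_of_real t - 1) = \<bar>t - 1\<bar>" by (metis norm_of_real of_real_1 of_real_diff)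
        thus ?thesis using wk t by simp
      qed
      finally have "dist (G (w ^ k * complex_of_real t)) (G (w ^ k)) < 1/4"
        using t by (intro dd) (auto simp: norm_mult wk)
      thus "norm (G (w ^ k * complex_of_real t) - G (w ^ k)) \<le> 1/4" by (simp add: dist_norm)
    qed simp
    also have "\<dots> = 1/4" using n by simp
    finally show ?thesis .
  qed
  have ny: "norm (of_real (t ^ n) * q ^ n :: 'a) \<le> 1/10"
  proof -
    have "norm (of_real (t ^ n) * q ^ n :: 'a) = norm ((t ^ n) *\<^sub>R q ^ n)" by (simp only: scaleR_conv_of_real)
    also have "\<dots> = t ^ n" using qn[of n] t by simp
    finally show ?thesis using n by simp
  qed
  hence ny': "norm (of_real (t ^ n) * q ^ n :: 'a) < 1" by simp
  have "norm (?A1 - 1) \<le> norm (of_real (t ^ n) * q ^ n :: 'a) / (1 - norm (of_real (t ^ n) * q ^ n :: 'a))"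
    unfolding y1n by (rule neumann(3)[OF ny'])
  also have "\<dots> \<le> 1/9" using ny ny' by (simp add: divide_le_eq)
  finally have d1: "norm (?A1 - 1) \<le> 1/9" .
  have "norm (?A2 - 1) \<le> norm (?A1 - ?A2) + norm (?A1 - 1)"
    using norm_triangle_ineq4[of "?A1 - ?A2" "?A1 - 1"] by (simp add: norm_minus_commute)
  hence d2: "norm (1 - ?A2) < 1/2" using d12 d1 by (simp add: norm_minus_commute)
  have inv_q: "inv_el (1 - q ^ n)" by (rule A2(1))
  have e1: "?A2 * (1 - q ^ n) = 1" "(1 - q ^ n) * ?A2 = 1" using inv_q by simp_all
  have "1 - (1 - ?A2) = ?A2" by simp
  have ne: "norm (inv_of (1 - (1 - ?A2)) - 1) \<le> norm (1 - ?A2) / (1 - norm (1 - ?A2))"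
    using d2 by (intro neumann(3)) simp
  moreover have "inv_of (1 - (1 - ?A2)) = 1 - q ^ n" using inv_unique(2)[OF e1] by simp
  ultimately have "norm (q ^ n) \<le> norm (1 - ?A2) / (1 - norm (1 - ?A2))" by simp
  also have "\<dots> < 1" using d2 by (simp add: divide_less_eq)
  finally show False using qn[of n] by simp
qed

lemma SRc:
  assumes k: "sa k" and r: "norm k = r" "r > 0"
  shows "\<not> inv_el (of_real r - k) \<or> \<not> inv_el (of_real r + k)"
proof (rule ccontr)
  assume "\<not> ?thesis"
  hence a: "inv_el (of_real r - k)" "inv_el (of_real r + k)" by auto
  define h where "h = (1 / r) *\<^sub>R k"
  have h: "sa h" using k unfolding h_def sa_def by (simp add: st_scaleR)
  have nh: "norm h = 1" using r unfolding h_def by simp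
  have ir: "inv_el (of_real (1 / r) :: 'a)"
  proof -
    have "complex_of_real (1/r) \<noteq> 0" using r by simp
    from cs_inv_el[OF this] show ?thesis by (simp only: cs_of_real)
  qed
  have "1 - h = of_real (1 / r) * (of_real r - k)" unfolding h_def scaleR_conv_of_real using r
    by (simp add: algebra_simps flip: of_real_mult)
  hence i1: "inv_el (1 - h)" using a(1) ir inv_el_mult by metis
  have "1 + h = of_real (1 / r) * (of_real r + k)" unfolding h_def scaleR_conv_of_real using r
    by (simp add: algebra_simps flip: of_real_mult)
  hence i2: "inv_el (1 + h)" using a(2) ir inv_el_mult by metis
  have "1 - h * h = (1 - h) * (1 + h)" by (simp add: algebra_simps)
  hence "inv_el (1 - h * h)" using i1 i2 inv_el_mult by metis
  thus False using SR_sa[OF h nh] by simp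
qed

end

context cstar
begin

definition pos :: "'a \<Rightarrow> bool" where
  "pos a \<longleftrightarrow> sa a \<and> (\<forall>\<mu>::real. \<mu> < 0 \<longrightarrow> inv_el (of_real \<mu> - a))"

lemma pos_sa: "pos a \<Longrightarrow> sa a" by (simp add: pos_def)

lemma sa_add: "sa a \<Longrightarrow> sa b \<Longrightarrow> sa (a + b)" by (simp add: sa_def st_add)
lemma sa_diff: "sa a \<Longrightarrow> sa b \<Longrightarrow> sa (a - b)" by (simp add: sa_def st_diff)
lemma sa_minus: "sa a \<Longrightarrow> sa (- a)" by (simp add: sa_def st_minus)
lemma sa_of_real: "sa (of_real r)" by (simp add: sa_def st_of_real)
lemma sa_scaleR: "sa a \<Longrightarrow> sa (r *\<^sub>R a)" by (simp add: sa_def st_scaleR)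
lemma sa_0[simp]: "sa 0" by (simp add: sa_def)
lemma sa_1[simp]: "sa 1" by (simp add: sa_def)

lemma normchar1:
  assumes h: "sa h" and t: "norm (of_real t - h) \<le> t" shows "pos h"
  unfolding pos_def
proof (intro conjI allI impI h)
  fix \<mu> :: real assume m: "\<mu> < 0"
  have "norm (of_real t - h) < \<bar>t - \<mu>\<bar>" using t m by simp
  hence "inv_el (of_real (t - \<mu>) - (of_real t - h))" by (rule inv_real_sub)
  hence "inv_el (- (of_real (t - \<mu>) - (of_real t - h)))" by (rule inv_el_minus)
  moreover have "- (of_real (t - \<mu>) - (of_real t - h)) = (of_real \<mu> - h :: 'a)"
    by (simp add: of_real_diff)
  ultimately show "inv_el (of_real \<mu> - h)" by simp
qed

lemma normchar2:
  assumes p: "pos h" and t: "norm h \<le> t" shows "norm (of_real t - h) \<le> t"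
proof (rule ccontr)
  assume "\<not> ?thesis"
  hence r: "norm (of_real t - h) > t" by simp
  define k where "k = of_real t - h"
  define r where "r = norm k"
  have k: "sa k" unfolding k_def using pos_sa[OF p] by (simp add: sa_diff sa_of_real)
  have rt: "r > t" "t \<ge> 0" using r t unfolding r_def k_def by (auto intro: order_trans[OF norm_ge_zero])
  have "\<not> inv_el (of_real r - k) \<or> \<not> inv_el (of_real r + k)"
    using SRc[OF k r_def[symmetric]] rt by simp
  moreover have "inv_el (of_real r - k)"
  proof -
    have "t - r < 0" using rt by simp
    hence "inv_el (of_real (t - r) - h)" using p unfolding pos_def by blast
    hence "inv_el (- (of_real (t - r) - h))" by (rule inv_el_minus)
    moreover have "- (of_real (t - r) - h) = of_real r - k" unfolding k_def by (simp add: of_real_diff)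
    ultimately show ?thesis by metis
  qed
  moreover have "inv_el (of_real r + k)"
  proof -
    have "norm h < \<bar>r + t\<bar>" using t rt by simp
    hence "inv_el (of_real (r + t) - h)" by (rule inv_real_sub)
    moreover have "of_real (r + t) - h = of_real r + k" unfolding k_def by (simp add: of_real_add)
    ultimately show ?thesis by metis
  qed
  ultimately show False by simp
qed

lemma pos_add: "pos a \<Longrightarrow> pos b \<Longrightarrow> pos (a + b)"
proof -
  assume a: "pos a" and b: "pos b"
  have "norm (of_real (norm a + norm b) - (a + b)) = norm ((of_real (norm a) - a) + (of_real (norm b) - b))"
    by (simp add: of_real_add algebra_simps)
  also have "\<dots> \<le> norm (of_real (norm a) - a) + norm (of_real (norm b) - b)" by (rule norm_triangle_ineq)
  also have "\<dots> \<le> norm a + norm b" using normchar2[OF a order.refl] normchar2[OF b order.refl] by simp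
  finally show ?thesis using pos_sa[OF a] pos_sa[OF b] by (intro normchar1 sa_add)
qed

lemma pos_of_real: "r \<ge> 0 \<Longrightarrow> pos (of_real r)"
  by (rule normchar1[where t=r]) (auto simp: sa_of_real)

lemma pos_0[simp]: "pos 0" using pos_of_real[of 0] by simp

lemma pos_scaleR: "pos a \<Longrightarrow> c \<ge> 0 \<Longrightarrow> pos (c *\<^sub>R a)"
proof -
  assume a: "pos a" and c: "c \<ge> 0"
  have "of_real (c * norm a) - c *\<^sub>R a = c *\<^sub>R (of_real (norm a) - a)"
    by (simp add: of_real_def scaleR_diff_right)
  hence "norm (of_real (c * norm a) - c *\<^sub>R a) = c * norm (of_real (norm a) - a)"
    using c by simp
  also have "\<dots> \<le> c * norm a" using normchar2[OF a order.refl] c by (simp add: mult_left_mono)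
  finally show ?thesis using pos_sa[OF a] by (intro normchar1 sa_scaleR)
qed

lemma pos_sum: "(\<And>i. i \<in> A \<Longrightarrow> pos (f i)) \<Longrightarrow> pos (sum f A)"
  by (induction A rule: infinite_finite_induct) (auto intro: pos_add)

lemma pos_sq: assumes h: "sa h" shows "pos (h * h)"
  unfolding pos_def
proof (intro conjI allI impI sa_mult_self h)
  fix \<mu> :: real assume m: "\<mu> < 0"
  define c where "c = cs (\<i> * complex_of_real (sqrt (- \<mu>)))"
  have cc: "c * c = of_real \<mu>"
  proof -
    have "c * c = cs ((\<i> * complex_of_real (sqrt (- \<mu>))) * (\<i> * complex_of_real (sqrt (- \<mu>))))"
      unfolding c_def by (rule cs_mult[symmetric])
    also have "(\<i> * complex_of_real (sqrt (- \<mu>))) * (\<i> * complex_of_real (sqrt (- \<mu>))) = complex_of_real \<mu>"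
    proof -
      have gen: "(\<i> * x) * (\<i> * x) = - (x * x)" for x :: complex by (simp add: algebra_simps)
      have "sqrt (- \<mu>) * sqrt (- \<mu>) = - \<mu>" using m by simp
      hence "complex_of_real (sqrt (- \<mu>)) * complex_of_real (sqrt (- \<mu>)) = - complex_of_real \<mu>"
        by (metis of_real_minus of_real_mult)
      thus ?thesis using gen by simp
    qed
    finally show ?thesis by (simp only: cs_of_real)
  qed
  have ch: "c * h = h * c" unfolding c_def by (rule cs_comm)
  have e: "of_real \<mu> - h * h = (c - h) * (c + h)" using cc by (simp add: algebra_simps ch)
  have sq: "sqrt (- \<mu>) \<noteq> 0" using m by simp
  have i1: "inv_el (c - h)" unfolding c_def by (rule nonreal_inv[OF h]) (use sq in simp)
  have "inv_el (cs (- (\<i> * complex_of_real (sqrt (- \<mu>)))) - h)" by (rule nonreal_inv[OF h]) (use sq in simp)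
  hence "inv_el (- (cs (- (\<i> * complex_of_real (sqrt (- \<mu>)))) - h))" by (rule inv_el_minus)
  hence i2: "inv_el (c + h)" unfolding c_def by (simp add: cs_minus add.commute)
  show "inv_el (of_real \<mu> - h * h)" unfolding e using i1 i2 by (rule inv_el_mult)
qed

lemma pos_lim:
  assumes f: "f \<longlonglongrightarrow> a" and p: "\<And>n. pos (f n)" shows "pos a"
proof -
  have "(\<lambda>n. st (f n)) \<longlonglongrightarrow> st a" by (rule bounded_linear.tendsto[OF bl_st f])
  moreover have "(\<lambda>n. st (f n)) = f" using p by (auto simp: pos_def sa_def)
  ultimately have "st a = a" using f LIMSEQ_unique by metis
  hence sa: "sa a" by (simp add: sa_def)
  define T where "T = norm a + 1"
  have "eventually (\<lambda>n. dist (f n) a < 1) sequentially" using f by (simp add: tendsto_iff)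
  hence ev: "eventually (\<lambda>n. norm (of_real T - f n) \<le> T) sequentially"
  proof (rule eventually_mono)
    fix n assume "dist (f n) a < 1"
    hence "norm (f n) \<le> T" unfolding T_def dist_norm using norm_triangle_ineq2[of "f n" a] by linarith
    thus "norm (of_real T - f n) \<le> T" by (rule normchar2[OF p])
  qed
  have "(\<lambda>n. norm (of_real T - f n)) \<longlonglongrightarrow> norm (of_real T - a)"
    by (intro tendsto_intros f)
  hence "norm (of_real T - a) \<le> T" using ev by (rule tendsto_upperbound) simp
  thus ?thesis by (intro normchar1[OF sa])
qed

lemma pos_norm_mono:
  assumes a: "pos a" and ba: "pos (b - a)" shows "norm a \<le> norm b"
proof (rule ccontr)
  assume "\<not> ?thesis"
  hence rt: "norm a > norm b" by simp
  define t where "t = norm b"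
  define r where "r = norm a"
  have b: "pos b" using pos_add[OF a ba] by simp
  have tb: "pos (of_real t - b)"
    unfolding pos_def
  proof (intro conjI allI impI)
    show "sa (of_real t - b)" using pos_sa[OF b] by (simp add: sa_diff sa_of_real)
    fix \<mu> :: real assume m: "\<mu> < 0"
    have "norm b < \<bar>t - \<mu>\<bar>" using m unfolding t_def by simp
    hence "inv_el (- (of_real (t - \<mu>) - b))" by (intro inv_el_minus inv_real_sub)
    moreover have "- (of_real (t - \<mu>) - b) = of_real \<mu> - (of_real t - b)" by (simp add: of_real_diff)
    ultimately show "inv_el (of_real \<mu> - (of_real t - b))" by metis
  qed
  have ta: "pos (of_real t - a)" using pos_add[OF tb ba] by simp
  have r0: "r > 0" using rt unfolding r_def t_def by (auto intro: le_less_trans[OF norm_ge_zero])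
  have "\<not> inv_el (of_real r - a) \<or> \<not> inv_el (of_real r + a)"
    using SRc[OF pos_sa[OF a] r_def[symmetric] r0] .
  moreover have "inv_el (of_real r - a)"
  proof -
    have "t - r < 0" using rt unfolding r_def t_def by simp
    hence "inv_el (of_real (t - r) - (of_real t - a))" using ta unfolding pos_def by blast
    hence "inv_el (- (of_real (t - r) - (of_real t - a)))" by (rule inv_el_minus)
    moreover have "- (of_real (t - r) - (of_real t - a)) = of_real r - a" by (simp add: of_real_diff)
    ultimately show ?thesis by metis
  qed
  moreover have "inv_el (of_real r + a)"
  proof -
    have "- r < 0" using r0 by simp
    hence "inv_el (of_real (- r) - a)" using a unfolding pos_def by blast
    hence "inv_el (- (of_real (- r) - a))" by (rule inv_el_minus)
    thus ?thesis by (simp add: add.commute)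
  qed
  ultimately show False by simp
qed

lemma jacobson:
  fixes a b :: 'a
  assumes m: "\<mu> \<noteq> 0" and i: "inv_el (of_real \<mu> - a * b)" shows "inv_el (of_real \<mu> - b * a)"
proof -
  define c where "c = inv_of (of_real \<mu> - a * b)"
  define d where "d = (1 / \<mu>) *\<^sub>R (1 + b * c * a)"
  have c1: "(of_real \<mu> - a * b) * c = 1" "c * (of_real \<mu> - a * b) = 1" using i unfolding c_def by simp_all
  have m1: "(1 / \<mu>) *\<^sub>R (of_real \<mu> :: 'a) = 1" using m by (simp add: of_real_def)
  have "(of_real \<mu> - b * a) * (b * c * a) = b * ((of_real \<mu> - a * b) * c) * a"
    by (simp add: algebra_simps mult.assoc of_real_def)
  hence e1: "(of_real \<mu> - b * a) * (b * c * a) = b * a" using c1 by simp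
  have "(b * c * a) * (of_real \<mu> - b * a) = b * (c * (of_real \<mu> - a * b)) * a"
    by (simp add: algebra_simps mult.assoc of_real_def)
  hence e2: "(b * c * a) * (of_real \<mu> - b * a) = b * a" using c1 by simp
  have "(of_real \<mu> - b * a) * d = (1 / \<mu>) *\<^sub>R ((of_real \<mu> - b * a) * (1 + b * c * a))"
    unfolding d_def by (rule mult_scaleR_right)
  also have "(of_real \<mu> - b * a) * (1 + b * c * a) = of_real \<mu>"
    using e1 by (simp add: distrib_left)
  also have "(1 / \<mu>) *\<^sub>R (of_real \<mu> :: 'a) = 1" by (rule m1)
  finally have r: "(of_real \<mu> - b * a) * d = 1" .
  have "d * (of_real \<mu> - b * a) = (1 / \<mu>) *\<^sub>R ((1 + b * c * a) * (of_real \<mu> - b * a))"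
    unfolding d_def by (rule mult_scaleR_left)
  also have "(1 + b * c * a) * (of_real \<mu> - b * a) = of_real \<mu>"
    using e2 by (simp add: distrib_right)
  also have "(1 / \<mu>) *\<^sub>R (of_real \<mu> :: 'a) = 1" by (rule m1)
  finally have l: "d * (of_real \<mu> - b * a) = 1" .
  show ?thesis using r l unfolding inv_el_def by blast
qed

end

definition csq :: "nat \<Rightarrow> real" where "csq k = ((1/2) gchoose k) * (-1) ^ k"

lemma csq_0[simp]: "csq 0 = 1" by (simp add: csq_def)

lemma csq_alt: "csq k = ((of_nat k - 3/2) gchoose k)"
proof -
  have "((1/2::real) gchoose k) = (-1) ^ k * ((of_nat k - 1/2 - 1) gchoose k)" by (rule gbinomial_negated_upper)
  hence "csq k = ((-1) ^ k * (-1) ^ k) * ((of_nat k - 1/2 - 1) gchoose k)" unfolding csq_def by (simp add: algebra_simps)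
  also have "(-1::real) ^ k * (-1) ^ k = 1" by (simp flip: power_add)
  finally show ?thesis by simp
qed

lemma csq_nonpos: assumes "k \<ge> 1" shows "csq k \<le> 0"
proof -
  obtain j where k: "k = Suc j" using assms by (cases k) auto
  have "csq k = (\<Prod>i = 0..<Suc j. (of_nat (Suc j) - 3/2 - of_nat i) / of_nat (Suc j - i))"
    unfolding csq_alt k by (rule gbinomial_altdef_of_nat)
  also have "\<dots> = (\<Prod>i = 0..<j. (of_nat (Suc j) - 3/2 - of_nat i) / of_nat (Suc j - i)) * ((of_nat (Suc j) - 3/2 - of_nat j) / of_nat (Suc j - j))"
    by (rule prod.atLeast0_lessThan_Suc)
  also have "\<dots> \<le> 0"
  proof (rule mult_nonneg_nonpos)
    show "0 \<le> (\<Prod>i = 0..<j. (of_nat (Suc j) - 3/2 - of_nat i) / of_nat (Suc j - i) :: real)"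
      by (intro prod_nonneg) auto
    show "(of_nat (Suc j) - 3/2 - of_nat j) / of_nat (Suc j - j) \<le> (0::real)" by simp
  qed
  finally show ?thesis .
qed

lemma csq_partial_nonneg: "(\<Sum>k\<le>N. csq k) \<ge> 0"
proof -
  have "(\<Sum>k\<le>N. csq k) = (-1) ^ N * ((1/2 - 1) gchoose N)"
    unfolding csq_def by (rule gbinomial_sum_lower_neg)
  also have "((1/2 - 1::real) gchoose N) = (-1) ^ N * ((of_nat N - (1/2 - 1) - 1) gchoose N)"
    by (rule gbinomial_negated_upper)
  finally have "(\<Sum>k\<le>N. csq k) = ((-1) ^ N * (-1) ^ N) * ((of_nat N - 1/2) gchoose N)" by simp
  also have "(-1::real) ^ N * (-1) ^ N = 1" by (simp flip: power_add)
  also have "((of_nat N - 1/2 :: real) gchoose N) = (\<Prod>i = 0..<N. (of_nat N - 1/2 - of_nat i) / of_nat (N - i))"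
    by (rule gbinomial_altdef_of_nat)
  finally have eq: "(\<Sum>k\<le>N. csq k) = (\<Prod>i = 0..<N. (of_nat N - 1/2 - of_nat i) / of_nat (N - i))" by simp
  have "(\<Prod>i = 0..<N. (of_nat N - 1/2 - of_nat i) / of_nat (N - i)) \<ge> (0::real)"
    by (intro prod_nonneg) (auto simp: of_nat_diff)
  thus ?thesis using eq by simp
qed

lemma csq_abs_tail: "(\<Sum>k<n. \<bar>csq (Suc k)\<bar>) \<le> 1"
proof -
  have ab: "\<bar>csq (Suc k)\<bar> = - csq (Suc k)" for k using csq_nonpos[of "Suc k"] by simp
  have "(\<Sum>k<n. \<bar>csq (Suc k)\<bar>) = - (\<Sum>k<n. csq (Suc k))"
    by (simp add: ab sum_negf)
  also have "(\<Sum>k<n. csq (Suc k)) = (\<Sum>k\<le>n. csq k) - 1"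
  proof -
    have "(\<Sum>k\<le>n. csq k) = (\<Sum>k<Suc n. csq k)" by (simp only: lessThan_Suc_atMost)
    also have "\<dots> = csq 0 + (\<Sum>k<n. csq (Suc k))" by (rule sum.lessThan_Suc_shift)
    finally show ?thesis by simp
  qed
  finally show ?thesis using csq_partial_nonneg[of n] by simp
qed

lemma csq_abs_summable: "summable (\<lambda>k. \<bar>csq k\<bar>)"
proof -
  have "summable (\<lambda>k. \<bar>csq (Suc k)\<bar>)"
  proof (rule bounded_imp_summable[where B=1])
    fix n show "(\<Sum>k\<le>n. \<bar>csq (Suc k)\<bar>) \<le> 1" using csq_abs_tail[of "Suc n"] by (simp only: lessThan_Suc_atMost)
  qed simp
  thus ?thesis using summable_Suc_iff[where f="\<lambda>k. \<bar>csq k\<bar>"] by simp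
qed

lemma csq_abs_summable': "summable (\<lambda>k. \<bar>csq (Suc k)\<bar>)"
  using summable_Suc_iff[where f="\<lambda>k. \<bar>csq k\<bar>"] csq_abs_summable by simp

lemma csq_abs_tail_sum: "(\<Sum>k. \<bar>csq (Suc k)\<bar>) \<le> 1"
  by (rule suminf_le_const[OF csq_abs_summable' csq_abs_tail])

lemma csq_conv: "(\<Sum>i\<le>k. csq i * csq (k - i)) = (if k = 0 then 1 else if k = 1 then -1 else 0)"
proof -
  have "(\<Sum>i\<le>k. csq i * csq (k - i)) = (\<Sum>i\<le>k. ((1/2) gchoose i) * ((1/2) gchoose (k - i)) * (-1) ^ k)"
  proof (intro sum.cong refl)
    fix i assume "i \<in> {..k}"
    hence "(-1::real) ^ i * (-1) ^ (k - i) = (-1) ^ k" by (simp flip: power_add)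
    thus "csq i * csq (k - i) = ((1/2) gchoose i) * ((1/2) gchoose (k - i)) * (-1) ^ k"
      unfolding csq_def by (metis (no_types, lifting) mult.assoc mult.left_commute)
  qed
  also have "\<dots> = (\<Sum>i=0..k. ((1/2::real) gchoose i) * ((1/2) gchoose (k - i))) * (-1) ^ k"
    by (simp add: sum_distrib_right atMost_atLeast0)
  also have "(\<Sum>i=0..k. ((1/2::real) gchoose i) * ((1/2) gchoose (k - i))) = (1/2 + 1/2) gchoose k"
    by (rule gbinomial_Vandermonde)
  also have "((1/2 + 1/2) gchoose k) = (of_nat 1 gchoose k :: real)" by simp
  also have "\<dots> = of_nat (1 choose k)" by (rule binomial_gbinomial[symmetric])
  finally show ?thesis by (cases k) (auto simp: binomial_eq_0)
qed

lemma power_comm_gen: "x * y = y * x \<Longrightarrow> x * y ^ k = y ^ k * (x :: 'a::monoid_mult)"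
  by (induction k) (auto simp: mult.assoc[symmetric], metis mult.assoc)

context cstar
begin

definition sqrt1m :: "'a \<Rightarrow> 'a" where "sqrt1m y = (\<Sum>k. csq k *\<^sub>R y ^ k)"

lemma sqrt1m_summable:
  fixes y :: 'a
  assumes y: "norm y \<le> 1" shows "summable (\<lambda>k. norm (csq k *\<^sub>R y ^ k))"
proof (rule summable_comparison_test[OF _ csq_abs_summable])
  show "\<exists>N. \<forall>n\<ge>N. norm (norm (csq n *\<^sub>R y ^ n)) \<le> \<bar>csq n\<bar>"
  proof (intro exI allI impI)
    fix n
    have "norm (y ^ n) \<le> 1" using norm_power_ineq[of y n] y by (metis power_le_one norm_ge_zero order_trans)
    thus "norm (norm (csq n *\<^sub>R y ^ n)) \<le> \<bar>csq n\<bar>" by (simp add: mult_left_le)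
  qed
qed

lemma sqrt1m_sq:
  assumes y: "norm y \<le> 1" shows "sqrt1m y * sqrt1m y = 1 - y"
proof -
  note s = sqrt1m_summable[OF y]
  have "sqrt1m y * sqrt1m y = (\<Sum>k. \<Sum>i\<le>k. (csq i *\<^sub>R y ^ i) * (csq (k - i) *\<^sub>R y ^ (k - i)))"
    unfolding sqrt1m_def by (rule Cauchy_product[OF s s])
  also have "\<dots> = (\<Sum>k. (if k = 0 then 1 else if k = 1 then -1 else 0) *\<^sub>R y ^ k)"
  proof (intro suminf_cong)
    fix k
    have "(\<Sum>i\<le>k. (csq i *\<^sub>R y ^ i) * (csq (k - i) *\<^sub>R y ^ (k - i))) = (\<Sum>i\<le>k. (csq i * csq (k - i)) *\<^sub>R y ^ k)"
    proof (intro sum.cong refl)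
      fix i assume "i \<in> {..k}"
      hence "y ^ i * y ^ (k - i) = y ^ k" by (simp flip: power_add)
      thus "(csq i *\<^sub>R y ^ i) * (csq (k - i) *\<^sub>R y ^ (k - i)) = (csq i * csq (k - i)) *\<^sub>R y ^ k" by simp
    qed
    also have "\<dots> = (\<Sum>i\<le>k. csq i * csq (k - i)) *\<^sub>R y ^ k" by (simp add: scaleR_sum_left)
    finally show "(\<Sum>i\<le>k. (csq i *\<^sub>R y ^ i) * (csq (k - i) *\<^sub>R y ^ (k - i))) = (if k = 0 then 1 else if k = 1 then -1 else 0) *\<^sub>R y ^ k"
      unfolding csq_conv .
  qed
  also have "\<dots> = (\<Sum>k\<in>{0,1}. (if k = 0 then 1 else if k = 1 then -1 else 0) *\<^sub>R y ^ k)"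
    by (rule suminf_finite) auto
  also have "\<dots> = 1 - y" by simp
  finally show ?thesis .
qed

lemma sqrt1m_tail:
  assumes y: "norm y \<le> 1" shows "norm (1 - sqrt1m y) \<le> 1"
proof -
  note s = sqrt1m_summable[OF y]
  have s': "summable (\<lambda>k. csq k *\<^sub>R y ^ k)" using summable_norm_cancel[OF s] .
  have ss: "summable (\<lambda>k. norm (csq (Suc k) *\<^sub>R y ^ Suc k))"
    using s summable_Suc_iff[where f="\<lambda>k. norm (csq k *\<^sub>R y ^ k)"] by simp
  have "sqrt1m y = (\<Sum>k. csq (Suc k) *\<^sub>R y ^ Suc k) + csq 0 *\<^sub>R y ^ 0"
    unfolding sqrt1m_def using suminf_split_head[OF s'] by simp
  hence "1 - sqrt1m y = - (\<Sum>k. csq (Suc k) *\<^sub>R y ^ Suc k)" by simp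
  hence "norm (1 - sqrt1m y) = norm (\<Sum>k. csq (Suc k) *\<^sub>R y ^ Suc k)" by simp
  also have "\<dots> \<le> (\<Sum>k. norm (csq (Suc k) *\<^sub>R y ^ Suc k))" by (rule summable_norm[OF ss])
  also have "\<dots> \<le> (\<Sum>k. \<bar>csq (Suc k)\<bar>)"
  proof (rule suminf_le[OF _ ss])
    show "summable (\<lambda>k. \<bar>csq (Suc k)\<bar>)" by (rule csq_abs_summable')
    fix k
    have "norm (y ^ Suc k) \<le> 1" using norm_power_ineq[of y "Suc k"] y by (metis power_le_one norm_ge_zero order_trans)
    thus "norm (csq (Suc k) *\<^sub>R y ^ Suc k) \<le> \<bar>csq (Suc k)\<bar>" by (simp add: mult_left_le)
  qed
  also have "\<dots> \<le> 1" by (rule csq_abs_tail_sum)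
  finally show ?thesis .
qed

lemma sqrt1m_sa:
  assumes y: "norm y \<le> 1" and sy: "sa y" shows "sa (sqrt1m y)"
proof -
  have s': "summable (\<lambda>k. csq k *\<^sub>R y ^ k)" using summable_norm_cancel[OF sqrt1m_summable[OF y]] .
  have "st (sqrt1m y) = (\<Sum>k. st (csq k *\<^sub>R y ^ k))"
    unfolding sqrt1m_def by (rule bounded_linear.suminf[OF bl_st s'])
  also have "\<dots> = sqrt1m y" unfolding sqrt1m_def using sy
    by (simp add: st_scaleR st_power sa_def)
  finally show ?thesis by (simp add: sa_def)
qed

lemma sqrt1m_comm:
  assumes y: "norm y \<le> 1" and xy: "x * y = y * x" shows "x * sqrt1m y = sqrt1m y * x"
proof -
  have s': "summable (\<lambda>k. csq k *\<^sub>R y ^ k)" using summable_norm_cancel[OF sqrt1m_summable[OF y]] .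
  have "x * sqrt1m y = (\<Sum>k. x * (csq k *\<^sub>R y ^ k))"
    unfolding sqrt1m_def by (rule suminf_mult[OF s', symmetric])
  also have "\<dots> = (\<Sum>k. (csq k *\<^sub>R y ^ k) * x)"
    using power_comm_gen[OF xy] by simp
  also have "\<dots> = sqrt1m y * x"
    unfolding sqrt1m_def by (rule suminf_mult2[OF s', symmetric])
  finally show ?thesis .
qed

lemma pos_sqrt:
  assumes h: "pos h"
  shows "\<exists>s. pos s \<and> s * s = h \<and> (\<forall>x. x * h = h * x \<longrightarrow> x * s = s * x)"
proof (cases "h = 0")
  case True thus ?thesis by (intro exI[of _ 0]) auto
next
  case False
  define t where "t = norm h"
  have t: "t > 0" using False unfolding t_def by simp
  define g where "g = (1 / t) *\<^sub>R h"
  have g: "pos g" unfolding g_def using t by (intro pos_scaleR h) auto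
  have ng: "norm g = 1" unfolding g_def t_def using t t_def by simp
  define y where "y = 1 - g"
  have ny: "norm y \<le> 1" unfolding y_def using normchar2[OF g, of 1] ng by simp
  have sy: "sa y" unfolding y_def using pos_sa[OF g] by (simp add: sa_diff)
  define u where "u = sqrt1m y"
  have uu: "u * u = g" unfolding u_def using sqrt1m_sq[OF ny] by (simp add: y_def)
  have su: "sa u" unfolding u_def by (rule sqrt1m_sa[OF ny sy])
  have "(norm u)\<^sup>2 = 1" using sa_sq_norm[OF su] uu ng by simp
  hence "norm u = 1 \<or> norm u = -1" by (simp add: power2_eq_1_iff)
  hence nu: "norm u \<le> 1" by auto
  have "norm (of_real 1 - u) \<le> 1" using sqrt1m_tail[OF ny] unfolding u_def by simp
  hence pu: "pos u" by (rule normchar1[OF su])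
  define s where "s = sqrt t *\<^sub>R u"
  have ps: "pos s" unfolding s_def using t by (intro pos_scaleR pu) simp
  have "s * s = (sqrt t * sqrt t) *\<^sub>R (u * u)" unfolding s_def by simp
  also have "\<dots> = h" using t uu unfolding g_def by simp
  finally have ss: "s * s = h" .
  have "x * s = s * x" if xh: "x * h = h * x" for x
  proof -
    have "x * y = y * x" unfolding y_def g_def using xh by (simp add: algebra_simps)
    hence "x * u = u * x" unfolding u_def by (rule sqrt1m_comm[OF ny])
    thus ?thesis unfolding s_def by simp
  qed
  thus ?thesis using ps ss by blast
qed

end

context cstar
begin

lemma pos_diff_abs:
  assumes x: "sa x" and s: "pos s" and ss: "s * s = x * x" and sx: "s * x = x * s"
  shows "pos (s - x)"
  unfolding pos_def
proof (intro conjI allI impI)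
  define p where "p = s - x"
  show "sa (s - x)" using pos_sa[OF s] x by (rule sa_diff)
  fix \<mu> :: real assume m: "\<mu> < 0"
  have pp: "p * p = 2 *\<^sub>R (p * s)"
  proof -
    have "p * p = s * s - s * x - x * s + x * x" unfolding p_def by (simp add: algebra_simps)
    also have "\<dots> = 2 *\<^sub>R (s * s) - 2 *\<^sub>R (x * s)" using ss sx by (simp add: scaleR_2)
    also have "\<dots> = 2 *\<^sub>R (p * s)" unfolding p_def by (simp add: algebra_simps scaleR_diff_right)
    finally show ?thesis .
  qed
  have ps: "p * s = s * p" unfolding p_def using sx by (simp add: algebra_simps)
  have "pos (2 *\<^sub>R s)" using s by (rule pos_scaleR) simp
  hence "inv_el (of_real \<mu> - 2 *\<^sub>R s)" using m unfolding pos_def by blast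
  hence iv: "inv_el (2 *\<^sub>R s - of_real \<mu>)" using inv_el_minus by fastforce
  define w where "w = inv_of (2 *\<^sub>R s - of_real \<mu>)"
  have w1: "(2 *\<^sub>R s - of_real \<mu>) * w = 1" "w * (2 *\<^sub>R s - of_real \<mu>) = 1" using iv unfolding w_def by simp_all
  have pc: "p * (2 *\<^sub>R s - of_real \<mu>) = (2 *\<^sub>R s - of_real \<mu>) * p"
    using ps by (simp add: algebra_simps of_real_def)
  have pw: "p * w = w * p" unfolding w_def by (rule inv_commute[OF iv pc])
  define Y where "Y = (1 / \<mu>) *\<^sub>R (1 - p * w)"
  have key: "(of_real \<mu> - p) * (1 - p * w) = of_real \<mu>"
  proof -
    have "(of_real \<mu> - p) * (1 - p * w) = of_real \<mu> - p - \<mu> *\<^sub>R (p * w) + (p * p) * w"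
      by (simp add: algebra_simps of_real_def)
    also have "(p * p) * w = p * (2 *\<^sub>R s) * w" using pp by simp
    also have "of_real \<mu> - p - \<mu> *\<^sub>R (p * w) + p * (2 *\<^sub>R s) * w = of_real \<mu> - p + p * ((2 *\<^sub>R s - of_real \<mu>) * w)"
      by (simp add: algebra_simps of_real_def)
    also have "\<dots> = of_real \<mu>" using w1 by simp
    finally show ?thesis .
  qed
  have key2: "(1 - p * w) * (of_real \<mu> - p) = of_real \<mu>"
  proof -
    have "(1 - p * w) * (of_real \<mu> - p) = of_real \<mu> - p - \<mu> *\<^sub>R (p * w) + p * (w * p)"
      by (simp add: algebra_simps of_real_def mult.assoc)
    also have "p * (w * p) = p * (p * w)" using pw by simp
    also have "of_real \<mu> - p - \<mu> *\<^sub>R (p * w) + p * (p * w) = (of_real \<mu> - p) * (1 - p * w)"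
      by (simp add: algebra_simps of_real_def mult.assoc)
    finally show ?thesis using key by simp
  qed
  have m0: "(1 / \<mu>) *\<^sub>R (of_real \<mu> :: 'a) = 1" using m by (simp add: of_real_def)
  have "(of_real \<mu> - p) * Y = 1" unfolding Y_def using key m0 by simp
  moreover have "Y * (of_real \<mu> - p) = 1" unfolding Y_def using key2 m0 by simp
  ultimately show "inv_el (of_real \<mu> - (s - x))" unfolding inv_el_def p_def by blast
qed

lemma negpos_zero:
  assumes p: "pos (- (st y * y))" shows "y = 0"
proof -
  define I where "I = cs \<i>"
  have II: "I * I = -1" unfolding I_def by (simp flip: cs_mult add: cs_minus)
  have stI: "st I = - I" unfolding I_def by (simp add: st_cs cs_minus)
  have Ic: "I * z = z * I" for z unfolding I_def by (rule cs_comm)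
  define h where "h = (1/2) *\<^sub>R (y + st y)"
  define d where "d = y - st y"
  define k where "k = (1/2) *\<^sub>R (I * d)"
  have sh: "sa h" unfolding h_def sa_def by (simp add: st_scaleR st_add add.commute)
  have sk: "sa k" unfolding k_def sa_def d_def
    by (simp add: st_scaleR st_mult st_diff stI Ic algebra_simps)
  have hh: "h * h = (1/4) *\<^sub>R ((y + st y) * (y + st y))" unfolding h_def by simp
  have "k * k = (1/4) *\<^sub>R ((I * d) * (I * d))" unfolding k_def by simp
  also have "(I * d) * (I * d) = (I * I) * (d * d)" by (metis Ic mult.assoc)
  finally have kk: "k * k = - ((1/4) *\<^sub>R (d * d))" using II by simp
  have e: "y * st y = 2 *\<^sub>R (h * h) + 2 *\<^sub>R (k * k) + (- (st y * y))"
    unfolding hh kk d_def by (simp add: algebra_simps scaleR_2[symmetric])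
  have pyy: "pos (y * st y)" unfolding e
    by (intro pos_add pos_scaleR pos_sq sh sk p) auto
  have inv: "inv_el (of_real \<mu> - st y * y)" if m: "\<mu> \<noteq> 0" for \<mu>
  proof (cases "\<mu> < 0")
    case True
    hence "inv_el (of_real \<mu> - y * st y)" using pyy unfolding pos_def by blast
    thus ?thesis by (rule jacobson[OF m])
  next
    case False
    hence "- \<mu> < 0" using m by simp
    hence "inv_el (of_real (- \<mu>) - (- (st y * y)))" using p unfolding pos_def by blast
    hence "inv_el (- (of_real (- \<mu>) - (- (st y * y))))" by (rule inv_el_minus)
    thus ?thesis by simp
  qed
  have "st y * y = 0"
  proof (rule ccontr)
    assume ne: "st y * y \<noteq> 0"
    define r where "r = norm (st y * y)"
    have r: "r > 0" using ne unfolding r_def by simp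
    have sy: "sa (st y * y)" by (simp add: sa_def st_mult)
    have "\<not> inv_el (of_real r - st y * y) \<or> \<not> inv_el (of_real r + st y * y)"
      by (rule SRc[OF sy r_def[symmetric] r])
    moreover have "inv_el (of_real r - st y * y)" using inv r by simp
    moreover have "inv_el (of_real r + st y * y)"
    proof -
      have "inv_el (of_real (- r) - st y * y)" using inv[of "- r"] r by simp
      hence "inv_el (- (of_real (- r) - st y * y))" by (rule inv_el_minus)
      thus ?thesis by (simp add: add.commute)
    qed
    ultimately show False by simp
  qed
  hence "(norm y)\<^sup>2 = 0" using cstar_id[of y] by simp
  thus ?thesis by simp
qed

theorem pos_star: "pos (st a * a)"
proof -
  define x where "x = st a * a"
  have sx: "sa x" unfolding x_def by (simp add: sa_def st_mult)
  have "pos (x * x)" by (rule pos_sq[OF sx])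
  then obtain s where s: "pos s" "s * s = x * x" and sc: "\<And>z. z * (x * x) = (x * x) * z \<Longrightarrow> z * s = s * z"
    using pos_sqrt by blast
  have xs: "x * s = s * x" using sc[of x] by (simp add: mult.assoc)
  have P: "pos (s - x)" by (rule pos_diff_abs[OF sx s xs[symmetric]])
  have M: "pos (s - (- x))" by (rule pos_diff_abs) (use sx s xs in \<open>auto simp: sa_minus\<close>)
  define v where "v = (1/2) *\<^sub>R (s - x)"
  define u where "u = (1/2) *\<^sub>R (s + x)"
  have pv: "pos v" unfolding v_def using P by (rule pos_scaleR) simp
  have pu: "pos u" unfolding u_def using M by (intro pos_scaleR) auto
  have xuv: "x = u - v" unfolding u_def v_def by (simp add: algebra_simps scaleR_2[symmetric])
  have uv: "u * v = 0" unfolding u_def v_def using s(2) xs by (simp add: algebra_simps)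
  have vu: "v * u = 0" unfolding u_def v_def using s(2) xs by (simp add: algebra_simps)
  obtain r where r: "pos r" "r * r = v" using pos_sqrt[OF pv] by blast
  have sr: "sa (r * r * r)" using pos_sa[OF r(1)] by (simp add: sa_def st_mult mult.assoc)
  have "v * v * v = (r * r) * (r * r) * (r * r)" using r(2) by simp
  also have "\<dots> = (r * r * r) * (r * r * r)" by (simp only: mult.assoc)
  finally have vvv: "v * v * v = (r * r * r) * (r * r * r)" .
  have pvvv: "pos (v * v * v)" unfolding vvv by (rule pos_sq[OF sr])
  have stv: "st v = v" using pos_sa[OF pv] by (simp add: sa_def)
  have "st (a * v) * (a * v) = v * x * v" unfolding x_def by (simp add: st_mult stv mult.assoc)
  also have "\<dots> = v * u * v - v * v * v" unfolding xuv by (simp add: algebra_simps)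
  also have "\<dots> = - (v * v * v)" using vu by simp
  finally have avv: "st (a * v) * (a * v) = - (v * v * v)" .
  hence "- (st (a * v) * (a * v)) = v * v * v" by simp
  hence "a * v = 0" using negpos_zero pvvv by metis
  hence v3: "v * v * v = 0" using avv by simp
  have sv: "sa v" using pos_sa[OF pv] .
  have "(v * v) * (v * v) = 0" using v3 by (metis mult.assoc mult_zero_right)
  hence "norm (v * v) = 0" using sa_sq_norm[OF sa_mult_self[OF sv]] by simp
  hence "v = 0" using sa_sq_norm[OF sv] by simp
  thus ?thesis using pu xuv unfolding x_def by simp
qed

lemma cpos_pos: "cpositive st a \<Longrightarrow> pos a"
  unfolding cpositive_def using pos_star by auto

lemma pos_conj: assumes h: "pos h" shows "pos (c * h * st c)"
proof -
  obtain s where s: "pos s" "s * s = h" using pos_sqrt[OF h] by blast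
  have e: "st (s * st c) = c * s" using pos_sa[OF s(1)] by (simp add: st_mult sa_def)
  have "c * h * st c = (c * s) * (s * st c)" by (simp only: s(2)[symmetric] mult.assoc)
  hence "c * h * st c = st (s * st c) * (s * st c)" by (simp only: e)
  thus ?thesis using pos_star by simp
qed

lemma pos_norm_sub: assumes h: "pos h" shows "pos (of_real (norm h) - h)"
proof (rule normchar1[where t="norm h"])
  show "sa (of_real (norm h) - h)" using pos_sa[OF h] by (simp add: sa_diff sa_of_real)
  show "norm (of_real (norm h) - (of_real (norm h) - h)) \<le> norm h" by simp
qed

lemma pos_bbstar: "pos (b * st b)" using pos_star[of "st b"] by simp

lemma cs_core:
  assumes U: "pos U" and C: "pos C"
    and q: "\<And>t::real. pos (U - (2 * t) *\<^sub>R (b * st b) + (t * t) *\<^sub>R (b * C * st b))"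
  shows "(norm b)\<^sup>2 \<le> norm U * norm C"
proof -
  have nb: "norm (b * st b) = (norm b)\<^sup>2" by (rule cstar_id')
  have pc: "pos (b * (of_real (norm C) - C) * st b)" by (rule pos_conj[OF pos_norm_sub[OF C]])
  have q2: "pos (U - (2 * t) *\<^sub>R (b * st b) + (t * t * norm C) *\<^sub>R (b * st b))" for t
  proof -
    have "pos ((U - (2 * t) *\<^sub>R (b * st b) + (t * t) *\<^sub>R (b * C * st b)) + (t * t) *\<^sub>R (b * (of_real (norm C) - C) * st b))"
      by (intro pos_add q pos_scaleR pc) simp
    moreover have "(U - (2 * t) *\<^sub>R (b * st b) + (t * t) *\<^sub>R (b * C * st b)) + (t * t) *\<^sub>R (b * (of_real (norm C) - C) * st b)
        = U - (2 * t) *\<^sub>R (b * st b) + (t * t * norm C) *\<^sub>R (b * st b)"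
      by (simp add: algebra_simps of_real_def scaleR_diff_right)
    ultimately show ?thesis by simp
  qed
  show ?thesis
  proof (cases "norm C = 0")
    case False
    hence c: "norm C > 0" by simp
    define t where "t = 1 / norm C"
    have eq: "U - (2 * t) *\<^sub>R (b * st b) + (t * t * norm C) *\<^sub>R (b * st b) = U - t *\<^sub>R (b * st b)"
      unfolding t_def using c by (simp add: algebra_simps scaleR_2[symmetric])
    have p1: "pos (U - t *\<^sub>R (b * st b))" using q2[of t] unfolding eq .
    have p2: "pos (t *\<^sub>R (b * st b))" unfolding t_def using c by (intro pos_scaleR pos_bbstar) simp
    have "norm (t *\<^sub>R (b * st b)) \<le> norm U" using pos_norm_mono[OF p2] p1 by simp
    hence "(norm b)\<^sup>2 / norm C \<le> norm U" unfolding t_def using c nb by simp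
    thus ?thesis using c by (simp add: divide_le_eq mult.commute)
  next
    case True
    have "norm (b * st b) = 0"
    proof (rule ccontr)
      assume ne: "norm (b * st b) \<noteq> 0"
      hence nbp: "norm (b * st b) > 0" by simp
      define t where "t = (norm U + 1) / (2 * norm (b * st b))"
      have t0: "t \<ge> 0" unfolding t_def using nbp by simp
      have p1: "pos (U - (2 * t) *\<^sub>R (b * st b))" using q2[of t] True by simp
      have p2: "pos ((2 * t) *\<^sub>R (b * st b))" using t0 by (intro pos_scaleR pos_bbstar) simp
      have "norm ((2 * t) *\<^sub>R (b * st b)) \<le> norm U" using pos_norm_mono[OF p2] p1 by simp
      moreover have "norm ((2 * t) *\<^sub>R (b * st b)) = norm U + 1" unfolding t_def using nbp by simp
      ultimately show False by simp
    qed
    thus ?thesis using nb True by simp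
  qed
qed

end

context cstar
begin

lemma finite_cs:
  fixes u c :: "nat \<Rightarrow> 'a"
  shows "(norm (\<Sum>j\<in>F. u j * st (c j)))\<^sup>2 \<le> norm (\<Sum>j\<in>F. u j * st (u j)) * norm (\<Sum>j\<in>F. c j * st (c j))"
proof (rule cs_core)
  let ?U = "\<Sum>j\<in>F. u j * st (u j)" and ?C = "\<Sum>j\<in>F. c j * st (c j)" and ?b = "\<Sum>j\<in>F. u j * st (c j)"
  show "pos ?U" by (intro pos_sum pos_bbstar)
  show "pos ?C" by (intro pos_sum pos_bbstar)
  fix t :: real
  define z where "z j = u j - t *\<^sub>R (?b * c j)" for j
  have stb: "st ?b = (\<Sum>j\<in>F. c j * st (u j))" by (simp add: st_sum st_mult)
  have tm: "z j * st (z j) = u j * st (u j) - t *\<^sub>R (u j * st (c j) * st ?b) - t *\<^sub>R (?b * (c j * st (u j)))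
      + (t * t) *\<^sub>R (?b * (c j * st (c j)) * st ?b)" for j
    unfolding z_def by (simp add: st_diff st_scaleR st_mult algebra_simps)
  have "(\<Sum>j\<in>F. z j * st (z j)) = ?U - t *\<^sub>R ((\<Sum>j\<in>F. u j * st (c j)) * st ?b) - t *\<^sub>R (?b * (\<Sum>j\<in>F. c j * st (u j)))
      + (t * t) *\<^sub>R (?b * (\<Sum>j\<in>F. c j * st (c j)) * st ?b)"
    unfolding tm by (simp add: sum.distrib sum_subtractf scaleR_sum_right sum_distrib_left sum_distrib_right)
  also have "\<dots> = ?U - (2 * t) *\<^sub>R (?b * st ?b) + (t * t) *\<^sub>R (?b * ?C * st ?b)"
    unfolding stb[symmetric] by (simp add: algebra_simps scaleR_2[symmetric])
  finally have eq: "(\<Sum>j\<in>F. z j * st (z j)) = ?U - (2 * t) *\<^sub>R (?b * st ?b) + (t * t) *\<^sub>R (?b * ?C * st ?b)" .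
  have "pos (\<Sum>j\<in>F. z j * st (z j))" by (intro pos_sum pos_bbstar)
  thus "pos (?U - (2 * t) *\<^sub>R (?b * st ?b) + (t * t) *\<^sub>R (?b * ?C * st ?b))" unfolding eq .
qed

end

locale cmod = cstar sc st
  for sc :: "complex \<Rightarrow> 'a::{real_normed_algebra_1,banach} \<Rightarrow> 'a" and st +
  fixes smult :: "'a \<Rightarrow> 'm::ab_group_add \<Rightarrow> 'm"
  assumes lm: "left_module smult"
begin

lemma sm_add: "smult a (x + y) = smult a x + smult a y" using lm unfolding left_module_def by blast
lemma sm_add_l: "smult (a + b) x = smult a x + smult b x" using lm unfolding left_module_def by blast
lemma sm_mult: "smult (a * b) x = smult a (smult b x)" using lm unfolding left_module_def by blast
lemma sm_1[simp]: "smult 1 x = x" using lm unfolding left_module_def by blast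
lemma sm_0[simp]: "smult 0 x = 0"
  using sm_add_l[of 0 0 x] by simp
lemma sm_minus: "smult (- a) x = - smult a x"
  using sm_add_l[of a "- a" x] by (simp add: add_eq_0_iff)
lemma sm_diff_l: "smult (a - b) x = smult a x - smult b x"
  using sm_add_l[of a "- b" x] sm_minus by simp
lemma sm_sum: "smult (sum f A) x = (\<Sum>i\<in>A. smult (f i) x)"
  by (induction A rule: infinite_finite_induct) (auto simp: sm_add_l)

end

locale cip = cmod sc st smult
  for sc :: "complex \<Rightarrow> 'a::{real_normed_algebra_1,banach} \<Rightarrow> 'a" and st
    and smult :: "'a \<Rightarrow> 'm::ab_group_add \<Rightarrow> 'm" +
  fixes ip :: "'m \<Rightarrow> 'm \<Rightarrow> 'a"
  assumes aip: "A_inner_product st smult ip"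
begin

lemma ip_lin: "ip (smult a x + y) z = a * ip x z + ip y z" using aip unfolding A_inner_product_def by blast
lemma ip_sym: "ip x y = st (ip y x)" using aip unfolding A_inner_product_def by blast
lemma ip_cpos: "cpositive st (ip x x)" using aip unfolding A_inner_product_def by blast
lemma ip_def0: "ip x x = 0 \<Longrightarrow> x = 0" using aip unfolding A_inner_product_def by blast

lemma ip_add_l: "ip (x + y) z = ip x z + ip y z" using ip_lin[of 1 x y z] by simp
lemma ip_0_l[simp]: "ip 0 z = 0" using ip_add_l[of 0 0 z] by simp
lemma ip_smult_l: "ip (smult a x) z = a * ip x z" using ip_lin[of a x 0 z] by simp
lemma ip_minus_l: "ip (- x) z = - ip x z" using ip_add_l[of x "- x" z] by (simp add: add_eq_0_iff)
lemma ip_diff_l: "ip (x - y) z = ip x z - ip y z" using ip_add_l[of x "- y" z] ip_minus_l by simp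
lemma ip_sum_l: "ip (sum f A) z = (\<Sum>i\<in>A. ip (f i) z)"
  by (induction A rule: infinite_finite_induct) (auto simp: ip_add_l)
lemma ip_add_r: "ip z (x + y) = ip z x + ip z y" by (simp add: ip_sym[of z] ip_add_l st_add)
lemma ip_0_r[simp]: "ip z 0 = 0" by (simp add: ip_sym[of z])
lemma ip_diff_r: "ip z (x - y) = ip z x - ip z y" by (simp add: ip_sym[of z] ip_diff_l st_diff)
lemma ip_smult_r: "ip z (smult a y) = ip z y * st a"
  by (simp add: ip_sym[of z] ip_smult_l st_mult)
lemma ip_pos: "pos (ip x x)" by (rule cpos_pos[OF ip_cpos])

lemma ip_cs: "(norm (ip x y))\<^sup>2 \<le> norm (ip x x) * norm (ip y y)"
proof (rule cs_core)
  show "pos (ip x x)" "pos (ip y y)" by (rule ip_pos)+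
  fix t :: real
  let ?b = "ip x y"
  define z where "z = x - smult (t *\<^sub>R ?b) y"
  have yx: "ip y x = st ?b" by (rule ip_sym)
  have "ip z z = ip x x - ip x y * st (t *\<^sub>R ?b) - (t *\<^sub>R ?b) * ip y x + (t *\<^sub>R ?b) * ip y y * st (t *\<^sub>R ?b)"
    unfolding z_def by (simp add: ip_diff_l ip_diff_r ip_smult_l ip_smult_r algebra_simps)
  also have "\<dots> = ip x x - (2 * t) *\<^sub>R (?b * st ?b) + (t * t) *\<^sub>R (?b * ip y y * st ?b)"
    unfolding yx by (simp add: st_scaleR algebra_simps scaleR_2[symmetric])
  finally have eq: "ip z z = ip x x - (2 * t) *\<^sub>R (?b * st ?b) + (t * t) *\<^sub>R (?b * ip y y * st ?b)" .
  show "pos (ip x x - (2 * t) *\<^sub>R (?b * st ?b) + (t * t) *\<^sub>R (?b * ip y y * st ?b))"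
    using ip_pos[of z] unfolding eq .
qed

lemma ip_cs': "norm (ip x y) \<le> ipnorm ip x * ipnorm ip y"
proof -
  have "(norm (ip x y))\<^sup>2 \<le> (ipnorm ip x * ipnorm ip y)\<^sup>2"
    using ip_cs[of x y] by (simp add: ipnorm_def power_mult_distrib)
  thus ?thesis by (rule power2_le_imp_le) (simp add: ipnorm_def)
qed

lemma ipnorm_nonneg: "ipnorm ip x \<ge> 0" by (simp add: ipnorm_def)
lemma ipnorm_sq: "(ipnorm ip x)\<^sup>2 = norm (ip x x)" by (simp add: ipnorm_def)

lemma ipnorm_triangle: "ipnorm ip (x + y) \<le> ipnorm ip x + ipnorm ip y"
proof -
  have "ip (x + y) (x + y) = ip x x + ip x y + ip y x + ip y y"
    by (simp add: ip_add_l ip_add_r)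
  hence "norm (ip (x + y) (x + y)) \<le> norm (ip x x) + norm (ip x y) + norm (ip y x) + norm (ip y y)"
    using norm_triangle_ineq[of "ip x x + ip x y + ip y x" "ip y y"] norm_triangle_ineq[of "ip x x + ip x y" "ip y x"]
      norm_triangle_ineq[of "ip x x" "ip x y"] by simp
  also have "\<dots> \<le> (ipnorm ip x)\<^sup>2 + ipnorm ip x * ipnorm ip y + ipnorm ip y * ipnorm ip x + (ipnorm ip y)\<^sup>2"
    using ip_cs'[of x y] ip_cs'[of y x] unfolding ipnorm_sq by linarith
  also have "\<dots> = (ipnorm ip x + ipnorm ip y)\<^sup>2" by (simp add: power2_eq_square algebra_simps)
  finally have "(ipnorm ip (x + y))\<^sup>2 \<le> (ipnorm ip x + ipnorm ip y)\<^sup>2" by (simp add: ipnorm_sq)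
  thus ?thesis by (rule power2_le_imp_le) (simp add: ipnorm_def)
qed

lemma ip_minus_r: "ip z (- x) = - ip z x" by (simp add: ip_sym[of z] ip_minus_l st_minus)

lemma ipnorm_minus: "ipnorm ip (- x) = ipnorm ip x"
  by (simp add: ipnorm_def ip_minus_l ip_minus_r)

lemma ipnorm_eq0: "ipnorm ip x = 0 \<Longrightarrow> x = 0"
  using ip_def0 by (simp add: ipnorm_def)

end

context cmod
begin

lemma polar_tendsto:
  fixes Q :: "nat \<Rightarrow> 'm \<Rightarrow> 'm \<Rightarrow> 'a" and R :: "'m \<Rightarrow> 'm \<Rightarrow> 'a"
  assumes Qadd: "\<And>n a w. Q n (a + w) (a + w) = Q n a a + Q n a w + Q n w a + Q n w w"
    and Qi1: "\<And>n a w. Q n a (smult (cs \<i>) w) = - (Q n a w * cs \<i>)"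
    and Qi2: "\<And>n a w. Q n (smult (cs \<i>) w) a = cs \<i> * Q n w a"
    and Radd: "\<And>a w. R (a + w) (a + w) = R a a + R a w + R w a + R w w"
    and Ri1: "\<And>a w. R a (smult (cs \<i>) w) = - (R a w * cs \<i>)"
    and Ri2: "\<And>a w. R (smult (cs \<i>) w) a = cs \<i> * R w a"
    and conv: "\<And>x. (\<lambda>n. Q n x x) \<longlonglongrightarrow> R x x"
  shows "(\<lambda>n. Q n a w) \<longlonglongrightarrow> R a w"
proof -
  define I where "I = cs \<i>"
  have II: "(- I) * I = 1" unfolding I_def by (simp flip: cs_mult add: cs_minus)
  have II2: "I * I = -1" unfolding I_def by (simp flip: cs_mult add: cs_minus)
  have Ic: "I * z = z * I" for z unfolding I_def by (rule cs_comm)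
  have sym: "(\<lambda>n. Q n a b + Q n b a) \<longlonglongrightarrow> R a b + R b a" for a b
  proof -
    have "(\<lambda>n. Q n (a + b) (a + b) - Q n a a - Q n b b) \<longlonglongrightarrow> R (a + b) (a + b) - R a a - R b b"
      by (intro tendsto_diff conv)
    moreover have "(\<lambda>n. Q n (a + b) (a + b) - Q n a a - Q n b b) = (\<lambda>n. Q n a b + Q n b a)"
      by (simp add: Qadd)
    moreover have "R (a + b) (a + b) - R a a - R b b = R a b + R b a" by (simp add: Radd)
    ultimately show ?thesis by simp
  qed
  have P1: "(\<lambda>n. Q n a w + Q n w a) \<longlonglongrightarrow> R a w + R w a" by (rule sym)
  have "(\<lambda>n. Q n a (smult I w) + Q n (smult I w) a) \<longlonglongrightarrow> R a (smult I w) + R (smult I w) a"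
    by (rule sym)
  moreover have "(\<lambda>n. Q n a (smult I w) + Q n (smult I w) a) = (\<lambda>n. I * (Q n w a - Q n a w))"
    unfolding I_def Qi1 Qi2 by (simp add: algebra_simps Ic[unfolded I_def])
  moreover have "R a (smult I w) + R (smult I w) a = I * (R w a - R a w)"
    unfolding I_def Ri1 Ri2 by (simp add: algebra_simps Ic[unfolded I_def])
  ultimately have "(\<lambda>n. I * (Q n w a - Q n a w)) \<longlonglongrightarrow> I * (R w a - R a w)" by simp
  hence "(\<lambda>n. (- I) * (I * (Q n w a - Q n a w))) \<longlonglongrightarrow> (- I) * (I * (R w a - R a w))"
    by (rule tendsto_mult_left)
  hence P2: "(\<lambda>n. Q n w a - Q n a w) \<longlonglongrightarrow> R w a - R a w"
    by (simp add: mult.assoc[symmetric] II2)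
  have "(\<lambda>n. (1/2) *\<^sub>R ((Q n a w + Q n w a) - (Q n w a - Q n a w))) \<longlonglongrightarrow> (1/2) *\<^sub>R ((R a w + R w a) - (R w a - R a w))"
    by (intro tendsto_scaleR tendsto_const tendsto_diff P1 P2)
  thus ?thesis by (simp add: scaleR_2[symmetric])
qed

end

context cip
begin

lemma ip_smult_I_r: "ip a (smult (cs \<i>) w) = - (ip a w * cs \<i>)"
  by (simp add: ip_smult_r st_cs cs_minus)
lemma ip_expand: "ip (a + w) (a + w) = ip a a + ip a w + ip w a + ip w w"
  by (simp add: ip_add_l ip_add_r)

lemma nt_form:
  assumes nt: "standard_nt_frame ip J xs"
  shows "(\<lambda>n. \<Sum>j\<in>J \<inter> {..<n}. ip y (xs j) * st (ip y (xs j))) \<longlonglongrightarrow> ip y y"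
proof -
  have eq: "\<And>j. ip (xs j) y = st (ip y (xs j))" by (rule ip_sym)
  have "(\<lambda>n. \<Sum>j\<in>J \<inter> {..<n}. ip y (xs j) * ip (xs j) y) \<longlonglongrightarrow> ip y y"
    using nt unfolding standard_nt_frame_def frame_psum_def by blast
  thus ?thesis by (simp only: eq)
qed

definition Qf :: "nat set \<Rightarrow> (nat \<Rightarrow> 'm) \<Rightarrow> nat \<Rightarrow> 'm \<Rightarrow> 'm \<Rightarrow> 'a" where
  "Qf J xs n a w = (\<Sum>j\<in>J \<inter> {..<n}. ip a (xs j) * ip (xs j) w)"

lemma Qf_conv:
  assumes nt: "standard_nt_frame ip J xs" shows "(\<lambda>n. Qf J xs n a w) \<longlonglongrightarrow> ip a w"
proof (rule polar_tendsto[where Q="Qf J xs" and R=ip])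
  show "Qf J xs n (a + w) (a + w) = Qf J xs n a a + Qf J xs n a w + Qf J xs n w a + Qf J xs n w w" for n a w
    unfolding Qf_def by (simp add: ip_add_l ip_add_r algebra_simps sum.distrib)
  show "Qf J xs n a (smult (cs \<i>) w) = - (Qf J xs n a w * cs \<i>)" for n a w
    unfolding Qf_def by (simp add: ip_smult_I_r sum_distrib_right sum_negf mult.assoc)
  show "Qf J xs n (smult (cs \<i>) w) a = cs \<i> * Qf J xs n w a" for n a w
    unfolding Qf_def by (simp add: ip_smult_l sum_distrib_left mult.assoc)
  show "ip (a + w) (a + w) = ip a a + ip a w + ip w a + ip w w" for a w by (rule ip_expand)
  show "ip a (smult (cs \<i>) w) = - (ip a w * cs \<i>)" for a w by (rule ip_smult_I_r)
  show "ip (smult (cs \<i>) w) a = cs \<i> * ip w a" for a w by (rule ip_smult_l)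
  show "(\<lambda>n. Qf J xs n x x) \<longlonglongrightarrow> ip x x" for x
    using nt unfolding standard_nt_frame_def frame_psum_def Qf_def by simp
qed

lemma tail_bound:
  assumes nt: "standard_nt_frame ip J xs" and F: "finite F" "F \<subseteq> J"
  shows "norm (\<Sum>j\<in>F. ip y (xs j) * st (ip y (xs j))) \<le> norm (ip y y)"
proof (rule pos_norm_mono)
  let ?c = "\<lambda>j. ip y (xs j) * st (ip y (xs j))"
  show "pos (sum ?c F)" by (intro pos_sum pos_bbstar)
  obtain N0 where N0: "F \<subseteq> {..<N0}" using finite_nat_bounded[OF F(1)] by blast
  have T: "(\<lambda>n. \<Sum>j\<in>J \<inter> {..<n}. ?c j) \<longlonglongrightarrow> ip y y"
    by (rule nt_form[OF nt])
  hence "(\<lambda>k. (\<Sum>j\<in>J \<inter> {..<k + N0}. ?c j) - sum ?c F) \<longlonglongrightarrow> ip y y - sum ?c F"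
    by (intro tendsto_diff tendsto_const LIMSEQ_ignore_initial_segment)
  moreover have "pos ((\<Sum>j\<in>J \<inter> {..<k + N0}. ?c j) - sum ?c F)" for k
  proof -
    have sub: "F \<subseteq> J \<inter> {..<k + N0}" using N0 F by auto
    have e: "(\<Sum>j\<in>J \<inter> {..<k + N0}. ?c j) = (\<Sum>j\<in>(J \<inter> {..<k + N0}) - F. ?c j) + sum ?c F"
      by (rule sum.subset_diff[OF sub]) simp
    have "(\<Sum>j\<in>J \<inter> {..<k + N0}. ?c j) - sum ?c F = (\<Sum>j\<in>(J \<inter> {..<k + N0}) - F. ?c j)"
      using e by simp
    thus ?thesis by (simp add: pos_sum pos_bbstar)
  qed
  ultimately show "pos (ip y y - sum ?c F)" by (rule pos_lim)
qed

lemma recon: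
  assumes nt: "standard_nt_frame ip J xs" and cp: "ip_complete ip"
  shows "(\<lambda>n. ipnorm ip (x - (\<Sum>j\<in>J \<inter> {..<n}. smult (ip x (xs j)) (xs j)))) \<longlonglongrightarrow> 0"
proof -
  define u where "u j = ip x (xs j)" for j
  define S where "S n = (\<Sum>j\<in>J \<inter> {..<n}. u j * st (u j))" for n
  define z where "z n = (\<Sum>j\<in>J \<inter> {..<n}. smult (u j) (xs j))" for n
  have S: "S \<longlonglongrightarrow> ip x x"
    unfolding S_def u_def by (rule nt_form[OF nt])
  have split: "J \<inter> {..<m} = (J \<inter> {..<n}) \<union> (J \<inter> {n..<m})" "(J \<inter> {..<n}) \<inter> (J \<inter> {n..<m}) = {}" if "n \<le> m" for n m
    using that by auto
  have bound: "(ipnorm ip (z m - z n))\<^sup>2 \<le> norm (S m - S n)" if nm: "n \<le> m" for m n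
  proof -
    define F where "F = J \<inter> {n..<m}"
    have Ff: "finite F" "F \<subseteq> J" unfolding F_def by auto
    have zd: "z m - z n = (\<Sum>j\<in>F. smult (u j) (xs j))"
      unfolding z_def F_def split(1)[OF nm] by (subst sum.union_disjoint) (use split(2)[OF nm] in auto)
    have Sd: "S m - S n = (\<Sum>j\<in>F. u j * st (u j))"
      unfolding S_def F_def split(1)[OF nm] by (subst sum.union_disjoint) (use split(2)[OF nm] in auto)
    define y where "y = z m - z n"
    have "ip y y = (\<Sum>j\<in>F. u j * ip (xs j) y)"
      unfolding y_def by (subst zd) (simp add: ip_sum_l ip_smult_l zd)
    also have "\<dots> = (\<Sum>j\<in>F. u j * st (ip y (xs j)))"
    proof -
      have eq: "\<And>j. ip (xs j) y = st (ip y (xs j))" by (rule ip_sym)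
      show ?thesis by (simp only: eq)
    qed
    finally have iy: "ip y y = (\<Sum>j\<in>F. u j * st (ip y (xs j)))" .
    have "(norm (ip y y))\<^sup>2 \<le> norm (\<Sum>j\<in>F. u j * st (u j)) * norm (\<Sum>j\<in>F. ip y (xs j) * st (ip y (xs j)))"
      unfolding iy by (rule finite_cs)
    also have "\<dots> \<le> norm (\<Sum>j\<in>F. u j * st (u j)) * norm (ip y y)"
      by (intro mult_left_mono tail_bound[OF nt Ff]) simp
    finally have "(norm (ip y y))\<^sup>2 \<le> norm (S m - S n) * norm (ip y y)" unfolding Sd .
    hence "norm (ip y y) \<le> norm (S m - S n)"
      by (cases "norm (ip y y) = 0") (auto simp: power2_eq_square mult_le_cancel_right)
    thus ?thesis unfolding y_def by (simp add: ipnorm_sq)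
  qed
  have cauchy: "\<forall>e>0. \<exists>N. \<forall>m\<ge>N. \<forall>n\<ge>N. ipnorm ip (z m - z n) < e"
  proof (intro allI impI)
    fix e :: real assume e: "e > 0"
    have "Cauchy S" using S by (rule LIMSEQ_imp_Cauchy)
    then obtain N where N: "\<And>m n. m \<ge> N \<Longrightarrow> n \<ge> N \<Longrightarrow> dist (S m) (S n) < e\<^sup>2"
      unfolding Cauchy_def using e by (meson zero_less_power)
    have "ipnorm ip (z m - z n) < e" if mn: "m \<ge> N" "n \<ge> N" for m n
    proof (cases "n \<le> m")
      case True
      have "(ipnorm ip (z m - z n))\<^sup>2 < e\<^sup>2" using bound[OF True] N[OF mn] by (simp add: dist_norm)
      thus ?thesis using e by (simp add: power_less_imp_less_base)
    next
      case False
      hence "m \<le> n" by simp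
      have "(ipnorm ip (z n - z m))\<^sup>2 < e\<^sup>2" using bound[OF \<open>m \<le> n\<close>] N[OF mn(2) mn(1)] by (simp add: dist_norm)
      hence "ipnorm ip (z n - z m) < e" using e by (simp add: power_less_imp_less_base)
      moreover have "z m - z n = - (z n - z m)" by simp
      ultimately show ?thesis by (simp only: ipnorm_minus)
    qed
    thus "\<exists>N. \<forall>m\<ge>N. \<forall>n\<ge>N. ipnorm ip (z m - z n) < e" by blast
  qed
  then obtain l where l: "(\<lambda>n. ipnorm ip (z n - l)) \<longlonglongrightarrow> 0"
    using cp unfolding ip_complete_def by blast
  have eqw: "ip x w = ip l w" for w
  proof -
    have "(\<lambda>n. ip (z n) w) \<longlonglongrightarrow> ip x w"
    proof -
      have "(\<lambda>n. Qf J xs n x w) \<longlonglongrightarrow> ip x w" by (rule Qf_conv[OF nt])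
      moreover have "ip (z n) w = Qf J xs n x w" for n
        unfolding z_def Qf_def u_def by (simp add: ip_sum_l ip_smult_l)
      ultimately show ?thesis by simp
    qed
    moreover have "(\<lambda>n. ip (z n) w) \<longlonglongrightarrow> ip l w"
    proof -
      have "(\<lambda>n. ipnorm ip (z n - l) * ipnorm ip w) \<longlonglongrightarrow> 0 * ipnorm ip w"
        by (intro tendsto_mult l tendsto_const)
      hence g: "(\<lambda>n. ipnorm ip (z n - l) * ipnorm ip w) \<longlonglongrightarrow> 0" by simp
      have ev: "eventually (\<lambda>n. norm (ip (z n) w - ip l w) \<le> ipnorm ip (z n - l) * ipnorm ip w) sequentially"
        by (intro always_eventually allI) (simp add: ip_diff_l[symmetric] ip_cs')
      have "(\<lambda>n. ip (z n) w - ip l w) \<longlonglongrightarrow> 0"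
        by (rule Lim_null_comparison[OF ev g])
      thus ?thesis by (simp add: LIM_zero_iff)
    qed
    ultimately show ?thesis by (rule LIMSEQ_unique)
  qed
  have "ip (x - l) (x - l) = 0" by (simp add: ip_diff_l eqw)
  hence "x - l = 0" by (rule ip_def0)
  hence xl: "x = l" by simp
  have "(\<lambda>n. ipnorm ip (x - z n)) = (\<lambda>n. ipnorm ip (z n - l))"
  proof
    fix n
    have "x - z n = - (z n - l)" using xl by simp
    thus "ipnorm ip (x - z n) = ipnorm ip (z n - l)" by (simp only: ipnorm_minus)
  qed
  thus ?thesis using l unfolding z_def u_def by simp
qed

end

lemma mk_cip: "cstar_alg sc st \<Longrightarrow> left_module sm \<Longrightarrow> A_inner_product st sm ip \<Longrightarrow> cip sc st sm ip"
  unfolding cip_def cmod_def cmod_axioms_def cip_axioms_def using cstar_alg_imp by blast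

lemma ipnorm_ge0: "ipnorm p x \<ge> 0" by (simp add: ipnorm_def)

lemma complete_transfer:
  fixes p q :: "'m::ab_group_add \<Rightarrow> 'm \<Rightarrow> 'a::real_normed_vector"
  assumes cp: "ip_complete p" and eq: "equiv_norms p q"
  shows "ip_complete q"
  unfolding ip_complete_def
proof (intro allI impI)
  fix f :: "nat \<Rightarrow> 'm"
  assume cq: "\<forall>e>0. \<exists>N. \<forall>m\<ge>N. \<forall>n\<ge>N. ipnorm q (f m - f n) < e"
  obtain c d where cd: "c > 0" "d > 0" "\<And>x. c * ipnorm p x \<le> ipnorm q x" "\<And>x. ipnorm q x \<le> d * ipnorm p x"
    using eq unfolding equiv_norms_def by blast
  have "\<forall>e>0. \<exists>N. \<forall>m\<ge>N. \<forall>n\<ge>N. ipnorm p (f m - f n) < e"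
  proof (intro allI impI)
    fix e :: real assume e: "e > 0"
    obtain N where N: "\<And>m n. m \<ge> N \<Longrightarrow> n \<ge> N \<Longrightarrow> ipnorm q (f m - f n) < c * e"
      using cq cd e by (meson mult_pos_pos)
    have "ipnorm p (f m - f n) < e" if "m \<ge> N" "n \<ge> N" for m n
    proof -
      have "c * ipnorm p (f m - f n) < c * e" using cd(3)[of "f m - f n"] N[OF that] by linarith
      thus ?thesis using cd(1) by simp
    qed
    thus "\<exists>N. \<forall>m\<ge>N. \<forall>n\<ge>N. ipnorm p (f m - f n) < e" by blast
  qed
  then obtain l where l: "(\<lambda>n. ipnorm p (f n - l)) \<longlonglongrightarrow> 0" using cp unfolding ip_complete_def by blast
  have g: "(\<lambda>n. d * ipnorm p (f n - l)) \<longlonglongrightarrow> 0" using tendsto_mult_right_zero[OF l] by simp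
  have ev: "eventually (\<lambda>n. norm (ipnorm q (f n - l)) \<le> d * ipnorm p (f n - l)) sequentially"
    by (intro always_eventually allI) (simp add: ipnorm_ge0 cd(4))
  show "\<exists>l. (\<lambda>n. ipnorm q (f n - l)) \<longlonglongrightarrow> 0" using Lim_null_comparison[OF ev g] by blast
qed

lemma half:
  assumes P: "cip sc st sm p" and Q: "cip sc st sm q"
    and ntp: "standard_nt_frame p J xs" and cp: "ip_complete p"
    and K: "\<And>v. ipnorm q v \<le> K * ipnorm p v"
  shows "(\<lambda>n. \<Sum>j\<in>J \<inter> {..<n}. p x (xs j) * q (xs j) x) \<longlonglongrightarrow> q x x"
proof -
  interpret P: cip sc st sm p by (rule P)
  interpret Q: cip sc st sm q by (rule Q)
  define z where "z n = (\<Sum>j\<in>J \<inter> {..<n}. sm (p x (xs j)) (xs j))" for n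
  have r: "(\<lambda>n. ipnorm p (x - z n)) \<longlonglongrightarrow> 0" unfolding z_def by (rule P.recon[OF ntp cp])
  have eqz: "q (z n) x = (\<Sum>j\<in>J \<inter> {..<n}. p x (xs j) * q (xs j) x)" for n
    unfolding z_def by (simp add: Q.ip_sum_l Q.ip_smult_l)
  have g: "(\<lambda>n. (K * ipnorm p (x - z n)) * ipnorm q x) \<longlonglongrightarrow> 0"
    using tendsto_mult_left_zero[OF tendsto_mult_right_zero[OF r]] by simp
  have ev: "eventually (\<lambda>n. norm (q (z n) x - q x x) \<le> (K * ipnorm p (x - z n)) * ipnorm q x) sequentially"
  proof (intro always_eventually allI)
    fix n
    have "norm (q (z n) x - q x x) = norm (q (x - z n) x)"
      by (simp add: Q.ip_diff_l norm_minus_commute)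
    also have "\<dots> \<le> ipnorm q (x - z n) * ipnorm q x" by (rule Q.ip_cs')
    also have "\<dots> \<le> (K * ipnorm p (x - z n)) * ipnorm q x"
      by (intro mult_right_mono K ipnorm_ge0)
    finally show "norm (q (z n) x - q x x) \<le> (K * ipnorm p (x - z n)) * ipnorm q x" .
  qed
  have "(\<lambda>n. q (z n) x - q x x) \<longlonglongrightarrow> 0" by (rule Lim_null_comparison[OF ev g])
  hence "(\<lambda>n. q (z n) x) \<longlonglongrightarrow> q x x" by (simp add: LIM_zero_iff)
  thus ?thesis unfolding eqz .
qed

lemma norm_bound_from_equiv:
  assumes "equiv_norms ip ip1" "equiv_norms ip ip2"
  shows "\<exists>K. \<forall>v. ipnorm ip2 v \<le> K * ipnorm ip1 v"
proof -
  obtain c1 d1 where c1: "c1 > 0" "\<And>x. c1 * ipnorm ip x \<le> ipnorm ip1 x"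
    using assms(1) unfolding equiv_norms_def by blast
  obtain c2 d2 where d2: "d2 > 0" "\<And>x. ipnorm ip2 x \<le> d2 * ipnorm ip x"
    using assms(2) unfolding equiv_norms_def by blast
  have "ipnorm ip2 v \<le> (d2 / c1) * ipnorm ip1 v" for v
  proof -
    have "ipnorm ip v \<le> ipnorm ip1 v / c1" using c1(2)[of v] c1(1) by (simp add: field_simps)
    hence "d2 * ipnorm ip v \<le> d2 * (ipnorm ip1 v / c1)" using d2(1) by (intro mult_left_mono) auto
    thus ?thesis using d2(2)[of v] by simp
  qed
  thus ?thesis by blast
qed

theorem corollary4p3:
  fixes sc :: "complex \<Rightarrow> 'a::{real_normed_algebra_1,banach} \<Rightarrow> 'a"
    and st :: "'a \<Rightarrow> 'a"
    and smult :: "'a \<Rightarrow> 'm::ab_group_add \<Rightarrow> 'm"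
    and ip ip1 ip2 :: "'m \<Rightarrow> 'm \<Rightarrow> 'a"
    and J :: "nat set" and xs :: "nat \<Rightarrow> 'm"
  assumes "hilbert_module sc st smult ip"
    and "finitely_generated smult \<or> countably_generated smult ip"
    and "standard_frame st ip J xs"
    and "A_inner_product st smult ip1" and "equiv_norms ip ip1"
    and "A_inner_product st smult ip2" and "equiv_norms ip ip2"
    and "standard_nt_frame ip1 J xs"
    and "standard_nt_frame ip2 J xs"
  shows "\<forall>x y. ip1 x y = ip2 x y"
proof -
  have csa: "cstar_alg sc st" and lm: "left_module smult" and cp: "ip_complete ip"
    using assms(1) unfolding hilbert_module_def by auto
  have P1: "cip sc st smult ip1" by (rule mk_cip[OF csa lm assms(4)])
  have P2: "cip sc st smult ip2" by (rule mk_cip[OF csa lm assms(6)])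
  interpret I1: cip sc st smult ip1 by (rule P1)
  interpret I2: cip sc st smult ip2 by (rule P2)
  have cp1: "ip_complete ip1" by (rule complete_transfer[OF cp assms(5)])
  have cp2: "ip_complete ip2" by (rule complete_transfer[OF cp assms(7)])
  obtain K12 where K12: "\<And>v. ipnorm ip2 v \<le> K12 * ipnorm ip1 v"
    using norm_bound_from_equiv[OF assms(5) assms(7)] by blast
  obtain K21 where K21: "\<And>v. ipnorm ip1 v \<le> K21 * ipnorm ip2 v"
    using norm_bound_from_equiv[OF assms(7) assms(5)] by blast
  have diag: "ip1 x x = ip2 x x" for x
  proof -
    have A: "(\<lambda>n. \<Sum>j\<in>J \<inter> {..<n}. ip1 x (xs j) * ip2 (xs j) x) \<longlonglongrightarrow> ip2 x x"
      by (rule half[OF P1 P2 assms(8) cp1 K12])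
    have B: "(\<lambda>n. \<Sum>j\<in>J \<inter> {..<n}. ip2 x (xs j) * ip1 (xs j) x) \<longlonglongrightarrow> ip1 x x"
      by (rule half[OF P2 P1 assms(9) cp2 K21])
    have "(\<lambda>n. st (\<Sum>j\<in>J \<inter> {..<n}. ip2 x (xs j) * ip1 (xs j) x)) \<longlonglongrightarrow> st (ip1 x x)"
      by (rule bounded_linear.tendsto[OF I1.bl_st B])
    moreover have "st (\<Sum>j\<in>J \<inter> {..<n}. ip2 x (xs j) * ip1 (xs j) x) = (\<Sum>j\<in>J \<inter> {..<n}. ip1 x (xs j) * ip2 (xs j) x)" for n
      by (simp add: I1.st_sum I1.st_mult I1.ip_sym[of x] I2.ip_sym[of x])
    moreover have "st (ip1 x x) = ip1 x x" using I1.ip_sym[of x x] by simp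
    ultimately have "(\<lambda>n. \<Sum>j\<in>J \<inter> {..<n}. ip1 x (xs j) * ip2 (xs j) x) \<longlonglongrightarrow> ip1 x x" by simp
    thus ?thesis using A LIMSEQ_unique by blast
  qed
  show ?thesis
  proof (intro allI)
    fix a w
    have "(\<lambda>n::nat. ip1 a w) \<longlonglongrightarrow> ip2 a w"
    proof (rule I1.polar_tendsto[where Q="\<lambda>n. ip1" and R=ip2])
      show "ip1 (a + w) (a + w) = ip1 a a + ip1 a w + ip1 w a + ip1 w w" for a w by (rule I1.ip_expand)
      show "ip1 a (smult (I1.cs \<i>) w) = - (ip1 a w * I1.cs \<i>)" for a w by (rule I1.ip_smult_I_r)
      show "ip1 (smult (I1.cs \<i>) w) a = I1.cs \<i> * ip1 w a" for a w by (rule I1.ip_smult_l)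
      show "ip2 (a + w) (a + w) = ip2 a a + ip2 a w + ip2 w a + ip2 w w" for a w by (rule I2.ip_expand)
      show "ip2 a (smult (I1.cs \<i>) w) = - (ip2 a w * I1.cs \<i>)" for a w by (rule I2.ip_smult_I_r)
      show "ip2 (smult (I1.cs \<i>) w) a = I1.cs \<i> * ip2 w a" for a w by (rule I2.ip_smult_l)
      show "(\<lambda>n. ip1 x x) \<longlonglongrightarrow> ip2 x x" for x using diag[of x] by simp
    qed
    thus "ip1 a w = ip2 a w" by (simp add: LIMSEQ_const_iff)
  qed
qed

end
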